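(* Under the standing assumptions the following identities hold: \begin{align*} Q_{2,j}(a)&=(-1)^j\,\mathbf m_0^{-1}\mathbf l_0^{-1}\mathbf m_1^{-1}\mathbf l_1^{-1}\cdots\mathbf l_{j-1}^{-1}\mathbf m_j^{-1}, && 0\le j\le n-1,\\ \Gamma_{1,j}(a)&=(-1)^j\,\mathbf m_0^{-1}\mathbf l_0^{-1}\mathbf m_1^{-1}\mathbf l_1^{-1}\cdots\mathbf m_{j-1}^{-1}\mathbf l_{j-1}^{-1}, && 1\le j\le n,\\ P_{2,j}(a)&=(-1)^j\,\mathbf m_0^{-1}\mathbf l_0^{-1}\cdots\mathbf l_{j-1}^{-1}\mathbf m_j^{-1}\,(\mathbf m_0+\mathbf m_1+\cdots+\mathbf m_j), && 1\le j\le n-1,\\ \Theta_{1,j}(a)&=(-1)^j\,\mathbf m_0^{-1}\mathbf l_0^{-1}\cdots\mathbf m_{j-1}^{-1}\mathbf l_{j-1}^{-1}\,(s_0+\mathbf l_0+\cdots+\mathbf l_{j-1}), && 1\le j\le n. \end{align*}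
   Context: Let $q,n\in\mathbb N$ and let $a<b$ be real numbers. All matrices are complex; $I_q$, $0_q$ are the $q\times q$ identity and zero matrices. Let $s_0,\dots,s_{2n+1}$ be Hermitian $q\times q$ matrices and set $\widehat s_j:=-ab\,s_j+(a+b)s_{j+1}-s_{j+2}$. Define $H_{1,j}:=(s_{l+k})_{l,k=0}^j$, $H_{2,j}:=(\widehat s_{l+k})_{l,k=0}^{j}$, $K_{1,j}:=(bs_{l+k}-s_{l+k+1})_{l,k=0}^{j}$, $K_{2,j}:=(-as_{l+k}+s_{l+k+1})_{l,k=0}^j$. Standing assumption: $H_{1,n},H_{2,n-1},K_{1,n},K_{2,n}$ are positive definite. Let $T_0:=0_q$ and, for $j\ge1$, let $T_j$ be the $(j+1)\times(j+1)$ block matrix (blocks $q\times q$) with $I_q$ in block positions $(l+1,l)$, $l=0,\dots,j-1$, and $0_q$ elsewhere; $R_j(z):=(I_{(j+1)q}-zT_j)^{-1}$; $v_j:=\mathrm{col}(I_q,0_q,\dots,0_q)\in\mathbb C^{(j+1)q\times q}$. Let $u_{2,0}:=-(a+b)s_0+s_1$, $u_{2,j}:=\mathrm{col}(u_{2,0},-\widehat s_0,\dots,-\widehat s_{j-1})$, $\widetilde u_{1,j}:=\mathrm{col}(s_0,s_1-bs_0,\dots,s_j-bs_{j-1})$; for $j\ge1$, $Y_{2,j}:=\mathrm{col}(\widehat s_j,\dots,\widehat s_{2j-1})$, $\widetilde Y_{1,j}:=\mathrm{col}(bs_j-s_{j+1},\dots,bs_{2j-1}-s_{2j})$. Polynomials: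 $P_{2,0}:=I_q$, $Q_{2,0}(z):=-(u_{2,0}+zs_0)$, $\Gamma_{1,0}:=I_q$, $\Theta_{1,0}:=s_0$; for $j\ge1$: $P_{2,j}(z):=(-Y_{2,j}^*H_{2,j-1}^{-1},I_q)R_j(z)v_j$, $Q_{2,j}(z):=-(-Y_{2,j}^*H_{2,j-1}^{-1},I_q)R_j(z)(u_{2,j}+zv_js_0)$, $\Gamma_{1,j}(z):=(-\widetilde Y_{1,j}^*K_{1,j-1}^{-1},I_q)R_j(z)v_j$, $\Theta_{1,j}(z):=(-\widetilde Y_{1,j}^*K_{1,j-1}^{-1},I_q)R_j(z)\widetilde u_{1,j}$. DSM parameters: $\lambda_j:=(u_{2,j}+av_js_0)^*R_j(a)^*H_{2,j}^{-1}R_j(a)(u_{2,j}+av_js_0)$, $\mu_j:=v_j^*R_j(a)^*K_{1,j}^{-1}R_j(a)v_j$; $\mathbf l_0:=\lambda_0$, $\mathbf l_j:=\lambda_j-\lambda_{j-1}$ ($1\le j\le n-1$); $\mathbf m_0:=\mu_0=(bs_0-s_1)^{-1}$, $\mathbf m_j:=\mu_j-\mu_{j-1}$ ($1\le j\le n$). These matrices are positive definite, in particular invertible. *)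

theory Defs
  imports "Jordan_Normal_Form.Schur_Decomposition"
begin

text \<open>All matrices are complex matrices of the Jordan_Normal_Form library (type complex mat),
  whose dimensions are values; this allows block matrices of size depending on j.\<close>

definition hermitian :: "complex mat \<Rightarrow> bool" where
  "hermitian A \<longleftrightarrow> square_mat A \<and> mat_adjoint A = A"

definition pos_def :: "complex mat \<Rightarrow> bool" where
  "pos_def A \<longleftrightarrow> hermitian A \<and>
     (\<forall>v \<in> carrier_vec (dim_row A). v \<noteq> 0\<^sub>v (dim_row A) \<longrightarrow>
        Re (conjugate v \<bullet> (A *\<^sub>v v)) > 0)"

definition minv :: "complex mat \<Rightarrow> complex mat" where
  "minv A = (SOME B. B \<in> carrier_mat (dim_col A) (dim_row A) \<and>
                     A * B = 1\<^sub>m (dim_row A) \<and> B * A = 1\<^sub>m (dim_col A))"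

definition block_mat :: "nat \<Rightarrow> nat \<Rightarrow> nat \<Rightarrow> (nat \<Rightarrow> nat \<Rightarrow> complex mat) \<Rightarrow> complex mat" where
  "block_mat q m k f = mat (m*q) (k*q) (\<lambda>(i,r). f (i div q) (r div q) $$ (i mod q, r mod q))"

definition block_col :: "nat \<Rightarrow> nat \<Rightarrow> (nat \<Rightarrow> complex mat) \<Rightarrow> complex mat" where
  "block_col q m f = mat (m*q) q (\<lambda>(i,r). f (i div q) $$ (i mod q, r))"

definition hcat :: "complex mat \<Rightarrow> complex mat \<Rightarrow> complex mat" where
  "hcat A B = mat (dim_row A) (dim_col A + dim_col B)
      (\<lambda>(i,r). if r < dim_col A then A $$ (i,r) else B $$ (i, r - dim_col A))"

fun msum :: "nat \<Rightarrow> (nat \<Rightarrow> complex mat) \<Rightarrow> nat \<Rightarrow> complex mat" where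
  "msum q f 0 = 0\<^sub>m q q"
| "msum q f (Suc m) = msum q f m + f m"

definition rsc :: "real \<Rightarrow> complex mat \<Rightarrow> complex mat" where
  "rsc x A = complex_of_real x \<cdot>\<^sub>m A"

definition shat :: "real \<Rightarrow> real \<Rightarrow> (nat \<Rightarrow> complex mat) \<Rightarrow> nat \<Rightarrow> complex mat" where
  "shat a b s j = rsc (-(a*b)) (s j) + rsc (a+b) (s (j+1)) - s (j+2)"

definition H1 :: "nat \<Rightarrow> (nat \<Rightarrow> complex mat) \<Rightarrow> nat \<Rightarrow> complex mat" where
  "H1 q s j = block_mat q (j+1) (j+1) (\<lambda>l k. s (l+k))"

definition H2 :: "nat \<Rightarrow> real \<Rightarrow> real \<Rightarrow> (nat \<Rightarrow> complex mat) \<Rightarrow> nat \<Rightarrow> complex mat" where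
  "H2 q a b s j = block_mat q (j+1) (j+1) (\<lambda>l k. shat a b s (l+k))"

definition K1 :: "nat \<Rightarrow> real \<Rightarrow> (nat \<Rightarrow> complex mat) \<Rightarrow> nat \<Rightarrow> complex mat" where
  "K1 q b s j = block_mat q (j+1) (j+1) (\<lambda>l k. rsc b (s (l+k)) - s (l+k+1))"

definition K2 :: "nat \<Rightarrow> real \<Rightarrow> (nat \<Rightarrow> complex mat) \<Rightarrow> nat \<Rightarrow> complex mat" where
  "K2 q a s j = block_mat q (j+1) (j+1) (\<lambda>l k. rsc (-a) (s (l+k)) + s (l+k+1))"

definition Tm :: "nat \<Rightarrow> nat \<Rightarrow> complex mat" where
  "Tm q j = block_mat q (j+1) (j+1) (\<lambda>l k. if l = k+1 then 1\<^sub>m q else 0\<^sub>m q q)"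

definition Rm :: "nat \<Rightarrow> nat \<Rightarrow> complex \<Rightarrow> complex mat" where
  "Rm q j z = minv (1\<^sub>m ((j+1)*q) - z \<cdot>\<^sub>m Tm q j)"

definition vm :: "nat \<Rightarrow> nat \<Rightarrow> complex mat" where
  "vm q j = block_col q (j+1) (\<lambda>i. if i = 0 then 1\<^sub>m q else 0\<^sub>m q q)"

definition u20 :: "real \<Rightarrow> real \<Rightarrow> (nat \<Rightarrow> complex mat) \<Rightarrow> complex mat" where
  "u20 a b s = rsc (-(a+b)) (s 0) + s 1"

definition u2 :: "nat \<Rightarrow> real \<Rightarrow> real \<Rightarrow> (nat \<Rightarrow> complex mat) \<Rightarrow> nat \<Rightarrow> complex mat" where
  "u2 q a b s j = block_col q (j+1) (\<lambda>i. if i = 0 then u20 a b s else - shat a b s (i-1))"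

definition ut1 :: "nat \<Rightarrow> real \<Rightarrow> (nat \<Rightarrow> complex mat) \<Rightarrow> nat \<Rightarrow> complex mat" where
  "ut1 q b s j = block_col q (j+1) (\<lambda>i. if i = 0 then s 0 else s i - rsc b (s (i-1)))"

definition Y2 :: "nat \<Rightarrow> real \<Rightarrow> real \<Rightarrow> (nat \<Rightarrow> complex mat) \<Rightarrow> nat \<Rightarrow> complex mat" where
  "Y2 q a b s j = block_col q j (\<lambda>i. shat a b s (j+i))"

definition Yt1 :: "nat \<Rightarrow> real \<Rightarrow> (nat \<Rightarrow> complex mat) \<Rightarrow> nat \<Rightarrow> complex mat" where
  "Yt1 q b s j = block_col q j (\<lambda>i. rsc b (s (j+i)) - s (j+i+1))"

definition P2 :: "nat \<Rightarrow> real \<Rightarrow> real \<Rightarrow> (nat \<Rightarrow> complex mat) \<Rightarrow> nat \<Rightarrow> complex \<Rightarrow> complex mat" where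
  "P2 q a b s j z = (if j = 0 then 1\<^sub>m q else
     hcat (- (mat_adjoint (Y2 q a b s j) * minv (H2 q a b s (j-1)))) (1\<^sub>m q)
       * Rm q j z * vm q j)"

definition Q2 :: "nat \<Rightarrow> real \<Rightarrow> real \<Rightarrow> (nat \<Rightarrow> complex mat) \<Rightarrow> nat \<Rightarrow> complex \<Rightarrow> complex mat" where
  "Q2 q a b s j z = (if j = 0 then - (u20 a b s + z \<cdot>\<^sub>m s 0) else
     - (hcat (- (mat_adjoint (Y2 q a b s j) * minv (H2 q a b s (j-1)))) (1\<^sub>m q)
       * Rm q j z * (u2 q a b s j + z \<cdot>\<^sub>m (vm q j * s 0))))"

definition Gamma1 :: "nat \<Rightarrow> real \<Rightarrow> (nat \<Rightarrow> complex mat) \<Rightarrow> nat \<Rightarrow> complex \<Rightarrow> complex mat" where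
  "Gamma1 q b s j z = (if j = 0 then 1\<^sub>m q else
     hcat (- (mat_adjoint (Yt1 q b s j) * minv (K1 q b s (j-1)))) (1\<^sub>m q)
       * Rm q j z * vm q j)"

definition Theta1 :: "nat \<Rightarrow> real \<Rightarrow> (nat \<Rightarrow> complex mat) \<Rightarrow> nat \<Rightarrow> complex \<Rightarrow> complex mat" where
  "Theta1 q b s j z = (if j = 0 then s 0 else
     hcat (- (mat_adjoint (Yt1 q b s j) * minv (K1 q b s (j-1)))) (1\<^sub>m q)
       * Rm q j z * ut1 q b s j)"

definition lam :: "nat \<Rightarrow> real \<Rightarrow> real \<Rightarrow> (nat \<Rightarrow> complex mat) \<Rightarrow> nat \<Rightarrow> complex mat" where
  "lam q a b s j = (let w = Rm q j (complex_of_real a) * (u2 q a b s j + rsc a (vm q j * s 0))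
                    in mat_adjoint w * minv (H2 q a b s j) * w)"

definition mu :: "nat \<Rightarrow> real \<Rightarrow> real \<Rightarrow> (nat \<Rightarrow> complex mat) \<Rightarrow> nat \<Rightarrow> complex mat" where
  "mu q a b s j = (let w = Rm q j (complex_of_real a) * vm q j
                   in mat_adjoint w * minv (K1 q b s j) * w)"

definition lDSM :: "nat \<Rightarrow> real \<Rightarrow> real \<Rightarrow> (nat \<Rightarrow> complex mat) \<Rightarrow> nat \<Rightarrow> complex mat" where
  "lDSM q a b s j = (if j = 0 then lam q a b s 0 else lam q a b s j - lam q a b s (j-1))"

definition mDSM :: "nat \<Rightarrow> real \<Rightarrow> real \<Rightarrow> (nat \<Rightarrow> complex mat) \<Rightarrow> nat \<Rightarrow> complex mat" where
  "mDSM q a b s j = (if j = 0 then mu q a b s 0 else mu q a b s j - mu q a b s (j-1))"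

fun mlprod :: "nat \<Rightarrow> real \<Rightarrow> real \<Rightarrow> (nat \<Rightarrow> complex mat) \<Rightarrow> nat \<Rightarrow> complex mat" where
  "mlprod q a b s 0 = 1\<^sub>m q"
| "mlprod q a b s (Suc j) =
     mlprod q a b s j * minv (mDSM q a b s j) * minv (lDSM q a b s j)"

end

theory Submission imports Defs begin

definition bdd :: "(nat \<Rightarrow> nat \<Rightarrow> complex) \<Rightarrow> nat \<Rightarrow> bool" where
  "bdd f N \<longleftrightarrow> (\<forall>i k. N \<le> i \<or> N \<le> k \<longrightarrow> f i k = 0)"

typedef fm = "{f :: nat \<Rightarrow> nat \<Rightarrow> complex. \<exists>N. bdd f N}"
  morphisms ent Fm
  by (rule exI[of _ "\<lambda>i k. 0"], auto simp: bdd_def)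

setup_lifting type_definition_fm

lemma bdd_mono: "bdd f N \<Longrightarrow> N \<le> M \<Longrightarrow> bdd f M"
  unfolding bdd_def by force

lemma ent_bdd: "\<exists>N. bdd (ent x) N" using ent by auto

definition bnd :: "(nat \<Rightarrow> nat \<Rightarrow> complex) \<Rightarrow> nat" where
  "bnd f = (SOME N. bdd f N)"

lemma bnd: "\<exists>N. bdd f N \<Longrightarrow> bdd f (bnd f)"
  unfolding bnd_def by (rule someI_ex)

definition mm :: "(nat \<Rightarrow> nat \<Rightarrow> complex) \<Rightarrow> (nat \<Rightarrow> nat \<Rightarrow> complex) \<Rightarrow> nat \<Rightarrow> nat \<Rightarrow> complex" where
  "mm f g = (\<lambda>i k. \<Sum>t<bnd f. f i t * g t k)"

lemma sum_lessThan_extend: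
  assumes "\<And>t. M \<le> t \<Longrightarrow> (g::nat \<Rightarrow> 'a::comm_monoid_add) t = 0" and "M \<le> B"
  shows "sum g {..<B} = sum g {..<M}"
  by (rule sum.mono_neutral_right, insert assms, auto)

lemma mm_eq:
  assumes "\<exists>N. bdd f N" and "bdd f M"
  shows "mm f g i k = (\<Sum>t<M. f i t * g t k)"
proof -
  have b: "bdd f (bnd f)" using bnd[OF assms(1)] .
  let ?N = "max M (bnd f)"
  have "(\<Sum>t<bnd f. f i t * g t k) = (\<Sum>t<?N. f i t * g t k)"
    by (rule sum_lessThan_extend[symmetric], insert b, auto simp: bdd_def)
  also have "\<dots> = (\<Sum>t<M. f i t * g t k)"
    by (rule sum_lessThan_extend, insert assms(2), auto simp: bdd_def)
  finally show ?thesis unfolding mm_def by simp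
qed

lemma mm_bdd: assumes "bdd f N" "bdd g N" shows "bdd (mm f g) N"
  unfolding bdd_def
proof (intro allI impI)
  fix i k assume "N \<le> i \<or> N \<le> k"
  thus "mm f g i k = 0"
  proof -
    have e: "\<exists>N. bdd f N" using assms(1) by blast
    show ?thesis using \<open>N \<le> i \<or> N \<le> k\<close> assms unfolding mm_eq[OF e assms(1)] by (auto simp: bdd_def)
  qed
qed

instantiation fm :: real_algebra
begin
lift_definition zero_fm :: fm is "\<lambda>i k. 0" by (auto simp: bdd_def)
lift_definition plus_fm :: "fm \<Rightarrow> fm \<Rightarrow> fm" is "\<lambda>f g i k. f i k + g i k"
proof -
  fix f g :: "nat \<Rightarrow> nat \<Rightarrow> complex" assume "\<exists>N. bdd f N" "\<exists>N. bdd g N"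
  then obtain N M where "bdd f N" "bdd g M" by auto
  hence "bdd f (max N M)" "bdd g (max N M)" by (auto intro: bdd_mono)
  thus "\<exists>N. bdd (\<lambda>i k. f i k + g i k) N" by (intro exI[of _ "max N M"], auto simp: bdd_def)
qed
lift_definition minus_fm :: "fm \<Rightarrow> fm \<Rightarrow> fm" is "\<lambda>f g i k. f i k - g i k"
proof -
  fix f g :: "nat \<Rightarrow> nat \<Rightarrow> complex" assume "\<exists>N. bdd f N" "\<exists>N. bdd g N"
  then obtain N M where "bdd f N" "bdd g M" by auto
  hence "bdd f (max N M)" "bdd g (max N M)" by (auto intro: bdd_mono)
  thus "\<exists>N. bdd (\<lambda>i k. f i k - g i k) N" by (intro exI[of _ "max N M"], auto simp: bdd_def)
qed
lift_definition uminus_fm :: "fm \<Rightarrow> fm" is "\<lambda>f i k. - f i k"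
  by (metis (no_types, lifting) bdd_def neg_equal_0_iff_equal)
lift_definition scaleR_fm :: "real \<Rightarrow> fm \<Rightarrow> fm" is "\<lambda>c f i k. complex_of_real c * f i k"
  by (metis (no_types, lifting) bdd_def mult_zero_right)
lift_definition times_fm :: "fm \<Rightarrow> fm \<Rightarrow> fm" is mm
proof -
  fix f g :: "nat \<Rightarrow> nat \<Rightarrow> complex" assume "\<exists>N. bdd f N" "\<exists>N. bdd g N"
  then obtain N M where "bdd f N" "bdd g M" by auto
  hence "bdd f (max N M)" "bdd g (max N M)" by (auto intro: bdd_mono)
  thus "\<exists>N. bdd (mm f g) N" by (auto intro: mm_bdd)
qed
instance
proof
  fix x y z :: fm and a b :: real
  obtain N1 where b1: "bdd (ent x) N1" using ent_bdd by auto
  obtain N2 where b2: "bdd (ent y) N2" using ent_bdd by auto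
  obtain N3 where b3: "bdd (ent z) N3" using ent_bdd by auto
  define N where "N = max N1 (max N2 N3)"
  have bx: "bdd (ent x) N" and byy: "bdd (ent y) N" and bz: "bdd (ent z) N"
    using b1 b2 b3 unfolding N_def by (auto intro: bdd_mono)
  have bxy: "bdd (ent (x*y)) N" using mm_bdd[OF bx byy] by (simp add: times_fm.rep_eq)
  have bxpy: "bdd (ent (x+y)) N" using bx byy by (auto simp: bdd_def plus_fm.rep_eq)
  have bsx: "bdd (ent (a *\<^sub>R x)) N" using bx by (auto simp: bdd_def scaleR_fm.rep_eq)
  have me: "\<And>u v. bdd (ent u) N \<Longrightarrow> ent (u * v) = (\<lambda>i k. \<Sum>t<N. ent u i t * ent v t k)"
    unfolding times_fm.rep_eq by (rule ext, rule ext, rule mm_eq, insert ent_bdd, auto)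
  show "x * y * z = x * (y * z)"
  proof (rule ent_inject[THEN iffD1], rule ext, rule ext)
    fix i k
    have "ent (x*y*z) i k = (\<Sum>t<N. (\<Sum>u<N. ent x i u * ent y u t) * ent z t k)"
      using me[OF bxy] me[OF bx] by simp
    also have "\<dots> = (\<Sum>t<N. \<Sum>u<N. ent x i u * ent y u t * ent z t k)"
      by (simp add: sum_distrib_right)
    also have "\<dots> = (\<Sum>u<N. \<Sum>t<N. ent x i u * ent y u t * ent z t k)"
      by (rule sum.swap)
    also have "\<dots> = (\<Sum>u<N. ent x i u * (\<Sum>t<N. ent y u t * ent z t k))"
      by (simp add: sum_distrib_left mult.assoc)
    also have "\<dots> = ent (x*(y*z)) i k" using me[OF bx] me[OF byy] by simp
    finally show "ent (x*y*z) i k = ent (x*(y*z)) i k" .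
  qed
  show "(x + y) * z = x * z + y * z"
    apply (rule ent_inject[THEN iffD1], rule ext, rule ext)
    using me[OF bxpy] me[OF bx] me[OF byy]
    by (simp add: plus_fm.rep_eq distrib_right sum.distrib)
  show "x * (y + z) = x * y + x * z"
    apply (rule ent_inject[THEN iffD1], rule ext, rule ext)
    using me[OF bx]
    by (simp add: plus_fm.rep_eq distrib_left sum.distrib)
  show "a *\<^sub>R x * y = a *\<^sub>R (x * y)"
    apply (rule ent_inject[THEN iffD1], rule ext, rule ext)
    using me[OF bsx] me[OF bx]
    by (simp add: scaleR_fm.rep_eq sum_distrib_left mult.assoc)
  show "x * a *\<^sub>R y = a *\<^sub>R (x * y)"
    apply (rule ent_inject[THEN iffD1], rule ext, rule ext)
    using me[OF bx]
    by (simp add: scaleR_fm.rep_eq sum_distrib_left mult.left_commute)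
qed (simp_all add: ent_inject[symmetric] fun_eq_iff plus_fm.rep_eq minus_fm.rep_eq uminus_fm.rep_eq
   scaleR_fm.rep_eq zero_fm.rep_eq algebra_simps)
end


lemma fm_eqI: "(\<And>i k. ent x i k = ent y i k) \<Longrightarrow> x = y"
  by (rule ent_inject[THEN iffD1], auto)

lemma ent_times_gen:
  assumes "\<And>t. M \<le> t \<Longrightarrow> ent u i t * ent v t k = 0"
  shows "ent (u*v) i k = (\<Sum>t<M. ent u i t * ent v t k)"
proof -
  obtain N where b: "bdd (ent u) N" using ent_bdd by auto
  let ?L = "max N M"
  have bL: "bdd (ent u) ?L" using b by (rule bdd_mono) auto
  have "ent (u*v) i k = (\<Sum>t<?L. ent u i t * ent v t k)"
    unfolding times_fm.rep_eq by (rule mm_eq[OF _ bL], insert ent_bdd, auto)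
  also have "\<dots> = (\<Sum>t<M. ent u i t * ent v t k)"
    by (rule sum_lessThan_extend, insert assms, auto)
  finally show ?thesis .
qed

lemma ent_plus[simp]: "ent (x+y) i k = ent x i k + ent y i k" by (simp add: plus_fm.rep_eq)
lemma ent_minus[simp]: "ent (x-y) i k = ent x i k - ent y i k" by (simp add: minus_fm.rep_eq)
lemma ent_uminus[simp]: "ent (-x) i k = - ent x i k" by (simp add: uminus_fm.rep_eq)
lemma ent_zero[simp]: "ent 0 i k = 0" by (simp add: zero_fm.rep_eq)
lemma ent_scaleR[simp]: "ent (c *\<^sub>R x) i k = complex_of_real c * ent x i k" by (simp add: scaleR_fm.rep_eq)
lemma ent_sum: "ent (sum f A) i k = (\<Sum>a\<in>A. ent (f a) i k)"
  by (induct A rule: infinite_finite_induct, auto)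

lift_definition adj :: "fm \<Rightarrow> fm" is "\<lambda>f i k. cnj (f k i)"
  by (metis (no_types, lifting) bdd_def complex_cnj_zero)

lemma ent_adj[simp]: "ent (adj x) i k = cnj (ent x k i)" by (simp add: adj.rep_eq)

lemma adj_adj[simp]: "adj (adj x) = x" by (rule fm_eqI, simp)
lemma adj_plus[simp]: "adj (x+y) = adj x + adj y" by (rule fm_eqI, simp)
lemma adj_minus[simp]: "adj (x-y) = adj x - adj y" by (rule fm_eqI, simp)
lemma adj_uminus[simp]: "adj (-x) = - adj x" by (rule fm_eqI, simp)
lemma adj_zero[simp]: "adj 0 = 0" by (rule fm_eqI, simp)
lemma adj_scaleR[simp]: "adj (c *\<^sub>R x) = c *\<^sub>R adj x" by (rule fm_eqI, simp)
lemma adj_sum[simp]: "adj (sum f A) = (\<Sum>a\<in>A. adj (f a))"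
  by (induct A rule: infinite_finite_induct, auto)
lemma adj_times[simp]: "adj (x*y) = adj y * adj x"
proof (rule fm_eqI)
  fix i k
  obtain N1 where b1: "bdd (ent x) N1" using ent_bdd by auto
  obtain N2 where b2: "bdd (ent y) N2" using ent_bdd by auto
  let ?N = "max N1 N2"
  have "ent (adj (x*y)) i k = cnj (\<Sum>t<?N. ent x k t * ent y t i)"
    by (simp, subst ent_times_gen[of ?N], insert b1, auto simp: bdd_def)
  also have "\<dots> = (\<Sum>t<?N. ent (adj y) i t * ent (adj x) t k)"
    by (simp add: mult.commute)
  also have "\<dots> = ent (adj y * adj x) i k"
    by (subst ent_times_gen[of ?N], insert b2, auto simp: bdd_def)
  finally show "ent (adj (x*y)) i k = ent (adj y * adj x) i k" .
qed

lift_definition emb :: "complex mat \<Rightarrow> fm" is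
  "\<lambda>A i k. if i < dim_row A \<and> k < dim_col A then A $$ (i,k) else 0"
  by (rule_tac x="dim_row mat + dim_col mat" in exI, auto simp: bdd_def)

lemma ent_emb: "ent (emb A) i k = (if i < dim_row A \<and> k < dim_col A then A $$ (i,k) else 0)"
  by (simp add: emb.rep_eq)

lemma emb_mult: assumes "dim_col A = dim_row B" shows "emb (A*B) = emb A * emb B"
proof (rule fm_eqI)
  fix i k
  show "ent (emb (A*B)) i k = ent (emb A * emb B) i k"
    by (subst ent_times_gen[of "dim_col A"], auto simp: ent_emb assms scalar_prod_def
       intro!: sum.cong)
qed

lemma emb_add: assumes "dim_row A = dim_row B" "dim_col A = dim_col B"
  shows "emb (A+B) = emb A + emb B"
  by (rule fm_eqI, auto simp: ent_emb assms)
lemma emb_minus: assumes "dim_row A = dim_row B" "dim_col A = dim_col B"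
  shows "emb (A-B) = emb A - emb B"
  by (rule fm_eqI, auto simp: ent_emb assms)
lemma emb_uminus: "emb (-A) = - emb A"
  by (rule fm_eqI, auto simp: ent_emb)
lemma emb_smult: "emb (complex_of_real c \<cdot>\<^sub>m A) = c *\<^sub>R emb A"
  by (rule fm_eqI, auto simp: ent_emb)
lemma emb_zero: "emb (0\<^sub>m n m) = 0"
  by (rule fm_eqI, auto simp: ent_emb)

lemma mat_adjoint_dims[simp]: "dim_row (mat_adjoint A) = dim_col A" "dim_col (mat_adjoint A) = dim_row A"
  unfolding mat_adjoint_def by auto
lemma mat_adjoint_index[simp]: "i < dim_col A \<Longrightarrow> k < dim_row A \<Longrightarrow> mat_adjoint A $$ (i,k) = cnj (A $$ (k,i))"
  unfolding mat_adjoint_def by (simp add: mat_of_rows_index cols_def)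

lemma emb_adj: "emb (mat_adjoint A) = adj (emb A)"
  by (rule fm_eqI, auto simp: ent_emb)

lemma emb_inj: assumes "A \<in> carrier_mat n m" "B \<in> carrier_mat n m" "emb A = emb B" shows "A = B"
proof (rule eq_matI)
  fix i k assume "i < dim_row B" "k < dim_col B"
  have "ent (emb A) i k = ent (emb B) i k" using assms(3) by simp
  thus "A $$ (i,k) = B $$ (i,k)" using assms(1,2) \<open>i < dim_row B\<close> \<open>k < dim_col B\<close>
    by (auto simp: ent_emb)
qed (insert assms, auto)

lemma msum_carrier: "(\<And>i. i < m \<Longrightarrow> f i \<in> carrier_mat q q) \<Longrightarrow> msum q f m \<in> carrier_mat q q"
  by (induct m, auto)

lemma emb_msum: "(\<And>i. i < m \<Longrightarrow> f i \<in> carrier_mat q q) \<Longrightarrow> emb (msum q f m) = (\<Sum>i<m. emb (f i))"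
proof (induct m)
  case 0 thus ?case by (simp add: emb_zero)
next
  case (Suc m)
  have "msum q f m \<in> carrier_mat q q" using Suc by (intro msum_carrier, auto)
  moreover have "f m \<in> carrier_mat q q" using Suc by auto
  ultimately have "emb (msum q f m + f m) = emb (msum q f m) + emb (f m)"
    by (intro emb_add, auto)
  thus ?case using Suc by simp
qed


lift_definition J :: "nat \<Rightarrow> nat \<Rightarrow> fm" is "\<lambda>q l i k. if i = l*q + k \<and> k < q then 1 else 0"
  by (rule_tac x="Suc (nat2*nat1+nat1)" in exI, auto simp: bdd_def)

definition Iq :: "nat \<Rightarrow> fm" where "Iq q = emb (1\<^sub>m q)"

lemma ent_J: "ent (J q l) i k = (if i = l*q + k \<and> k < q then 1 else 0)"
  by (simp add: J.rep_eq)

lemma ent_Iq: "ent (Iq q) i k = (if i < q \<and> k < q \<and> i = k then 1 else 0)"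
  by (auto simp: Iq_def ent_emb)

lemma J0: "J q 0 = Iq q"
  by (rule fm_eqI, auto simp: ent_J ent_Iq)

lemma sum_if_eq: fixes M c :: nat shows "(\<Sum>t<M. if t = c then (g t :: 'a::comm_monoid_add) else 0) = (if c < M then g c else 0)"
  by (induct M, auto)
lemma sum_if_eq': fixes M c :: nat shows "(\<Sum>t<M. if c = t then (g t :: 'a::comm_monoid_add) else 0) = (if c < M then g c else 0)"
  by (induct M, auto)

lemma ent_times_J: "ent (x * J q r) i c = (if c < q then ent x i (r*q+c) else 0)"
proof -
  have "ent (x * J q r) i c = (\<Sum>t<r*q+q. ent x i t * ent (J q r) t c)"
    by (rule ent_times_gen, auto simp: ent_J)
  also have "\<dots> = (\<Sum>t<r*q+q. if t = r*q+c then (if c < q then ent x i t else 0) else 0)"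
    by (rule sum.cong, auto simp: ent_J)
  also have "\<dots> = (if c < q then ent x i (r*q+c) else 0)" by (subst sum_if_eq, auto)
  finally show ?thesis .
qed

lemma ent_adjJ_times: "ent (adj (J q l) * x) i c = (if i < q then ent x (l*q+i) c else 0)"
proof -
  have "ent (adj (J q l) * x) i c = cnj (ent (adj x * J q l) c i)"
    by (metis adj_adj adj_times ent_adj)
  thus ?thesis by (simp add: ent_times_J)
qed

lemma ent_J_times: "ent (J q l * x) i c = (if l*q \<le> i \<and> i < l*q+q then ent x (i - l*q) c else 0)"
proof -
  have "ent (J q l * x) i c = (\<Sum>t<q. ent (J q l) i t * ent x t c)"
    by (rule ent_times_gen, auto simp: ent_J)
  also have "\<dots> = (\<Sum>t<q. if t = i - l*q then (if l*q \<le> i then ent x t c else 0) else 0)"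
    by (rule sum.cong, auto simp: ent_J)
  also have "\<dots> = (if l*q \<le> i \<and> i < l*q+q then ent x (i - l*q) c else 0)"
    by (subst sum_if_eq, auto)
  finally show ?thesis .
qed

lemma ent_times_adjJ: "ent (x * adj (J q r)) i c = (if r*q \<le> c \<and> c < r*q+q then ent x i (c - r*q) else 0)"
proof -
  have "ent (x * adj (J q r)) i c = cnj (ent (J q r * adj x) c i)"
    by (metis adj_adj adj_times ent_adj)
  thus ?thesis by (simp add: ent_J_times)
qed

lemma block_idx: assumes "i < q" "c < q" "l*q + i = r*q + (c::nat)" shows "l = r \<and> i = c"
proof -
  have "l = (l*q+i) div q" using assms(1) by simp
  also have "\<dots> = (r*q+c) div q" using assms(3) by simp
  also have "\<dots> = r" using assms(2) by simp
  finally show ?thesis using assms by auto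
qed

lemma adjJ_J: "adj (J q l) * J q r = (if l = r then Iq q else 0)"
proof (rule fm_eqI)
  fix i c
  show "ent (adj (J q l) * J q r) i c = ent (if l = r then Iq q else 0) i c"
  proof (cases "l = r")
    case True thus ?thesis by (auto simp: ent_times_J ent_J ent_Iq)
  next
    case False
    have "\<not> (c < q \<and> i < q \<and> r*q + c = l*q + i)" using block_idx[of c q i r l] False by auto
    thus ?thesis using False by (auto simp: ent_times_J ent_J ent_Iq)
  qed
qed

lemma Iq_times: "ent (Iq q * x) i c = (if i < q then ent x i c else 0)"
  using ent_J_times[of q 0 x] by (simp add: J0[symmetric])
lemma times_Iq: "ent (x * Iq q) i c = (if c < q then ent x i c else 0)"
  using ent_times_J[of x q 0] by (simp add: J0[symmetric])

lemma adj_Iq: "adj (Iq q) = Iq q"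
  by (rule fm_eqI, auto simp: ent_Iq)

lemma J_Iq: "J q l * Iq q = J q l"
  by (rule fm_eqI, auto simp: times_Iq ent_J)
lemma Iq_adjJ: "Iq q * adj (J q l) = adj (J q l)"
  by (rule fm_eqI, auto simp: Iq_times ent_J)
lemma Iq_Iq: "Iq q * Iq q = Iq q"
  by (rule fm_eqI, auto simp: Iq_times ent_Iq)

lemma emb_Iq: "A \<in> carrier_mat q n \<Longrightarrow> Iq q * emb A = emb A"
  by (rule fm_eqI, auto simp: Iq_times ent_emb)
lemma emb_Iq2: "A \<in> carrier_mat n q \<Longrightarrow> emb A * Iq q = emb A"
  by (rule fm_eqI, auto simp: times_Iq ent_emb)

lemma ent_JxJ: "ent (J q l * x * adj (J q r)) i c =
   (if l*q \<le> i \<and> i < l*q+q \<and> r*q \<le> c \<and> c < r*q+q then ent x (i - l*q) (c - r*q) else 0)"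
  by (simp add: ent_times_adjJ ent_J_times)

lemma sum_block_pick: fixes q m i :: nat assumes q: "0 < q"
  shows "(\<Sum>l<m. if l*q \<le> i \<and> i < l*q+q then (F l :: complex) else 0)
     = (if i < m*q then F (i div q) else 0)"
proof -
  have "(\<Sum>l<m. if l*q \<le> i \<and> i < l*q+q then F l else 0) = (\<Sum>l<m. if l = i div q then F l else 0)"
  proof (rule sum.cong[OF refl])
    fix l
    have "(l*q \<le> i \<and> i < l*q+q) = (l = i div q)"
    proof
      assume h: "l*q \<le> i \<and> i < l*q+q"
      define x where "x = i - l*q"
      have i: "i = l*q + x" "x < q" using h unfolding x_def by auto
      thus "l = i div q" by simp
    next
      assume "l = i div q"
      moreover have "i = i div q * q + i mod q" by simp
      moreover have "i mod q < q" using q by simp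
      ultimately have "i = l*q + i mod q" "i mod q < q" by simp_all
      thus "l*q \<le> i \<and> i < l*q+q" by linarith
    qed
    thus "(if l*q \<le> i \<and> i < l*q+q then F l else 0) = (if l = i div q then F l else 0)" by simp
  qed
  also have "\<dots> = (if i div q < m then F (i div q) else 0)" by (rule sum_if_eq)
  also have "(i div q < m) = (i < m*q)" by (rule div_less_iff_less_mult[OF q])
  finally show ?thesis .
qed

lemma emb_Iq': "A \<in> carrier_mat q q \<Longrightarrow> Iq q * emb A = emb A" by (rule emb_Iq)
lemma emb_Iq2': "A \<in> carrier_mat q q \<Longrightarrow> emb A * Iq q = emb A" by (rule emb_Iq2)

lemma emb_block_mat:
  assumes q: "0 < q" and f: "\<And>l r. l < m \<Longrightarrow> r < k \<Longrightarrow> f l r \<in> carrier_mat q q"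
  shows "emb (block_mat q m k f) = (\<Sum>l<m. \<Sum>r<k. J q l * emb (f l r) * adj (J q r))"
proof (rule fm_eqI)
  fix i c
  have "ent (\<Sum>l<m. \<Sum>r<k. J q l * emb (f l r) * adj (J q r)) i c
     = (\<Sum>l<m. if l*q \<le> i \<and> i < l*q+q then
          (\<Sum>r<k. if r*q \<le> c \<and> c < r*q+q then ent (emb (f l r)) (i - l*q) (c - r*q) else 0) else 0)"
    apply (simp add: ent_sum ent_JxJ)
    apply (rule sum.cong[OF refl])
    apply auto
    done
  also have "\<dots> = (if i < m*q then (if c < k*q then ent (emb (f (i div q) (c div q))) (i - (i div q)*q) (c - (c div q)*q) else 0) else 0)"
    by (simp add: sum_block_pick[OF q])
  also have "\<dots> = ent (emb (block_mat q m k f)) i c"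
  proof -
    have "i < m*q \<Longrightarrow> i div q < m" "c < k*q \<Longrightarrow> c div q < k" using q
      by (simp_all add: div_less_iff_less_mult)
    moreover have "i mod q < q" "c mod q < q" using q by auto
    moreover have "i < m*q \<Longrightarrow> c < k*q \<Longrightarrow> dim_row (f (i div q) (c div q)) = q \<and> dim_col (f (i div q) (c div q)) = q"
      using f calculation by auto
    ultimately show ?thesis using q
      by (auto simp: ent_emb block_mat_def minus_div_mult_eq_mod)
  qed
  finally show "ent (emb (block_mat q m k f)) i c = ent (\<Sum>l<m. \<Sum>r<k. J q l * emb (f l r) * adj (J q r)) i c" ..
qed

lemma block_col_mat: "block_col q m f = block_mat q m 1 (\<lambda>l r. f l)"
  unfolding block_col_def block_mat_def by (rule eq_matI, auto)

lemma emb_block_col: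
  assumes q: "0 < q" and f: "\<And>l. l < m \<Longrightarrow> f l \<in> carrier_mat q q"
  shows "emb (block_col q m f) = (\<Sum>l<m. J q l * emb (f l))"
proof -
  have "emb (block_col q m f) = (\<Sum>l<m. J q l * emb (f l) * Iq q)"
    unfolding block_col_mat by (subst emb_block_mat[OF q], insert f, auto simp: J0 adj_Iq)
  also have "\<dots> = (\<Sum>l<m. J q l * emb (f l))"
    by (rule sum.cong, insert f, auto simp: mult.assoc emb_Iq2')
  finally show ?thesis .
qed

definition Pm :: "nat \<Rightarrow> nat \<Rightarrow> fm" where "Pm q m = (\<Sum>l<m. J q l * adj (J q l))"

lemma emb_one_block: assumes q: "0 < q" shows "emb (1\<^sub>m (m*q)) = Pm q m"
proof -
  have "1\<^sub>m (m*q) = block_mat q m m (\<lambda>l r. if l = r then 1\<^sub>m q else 0\<^sub>m q q)"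
  proof (rule eq_matI)
    fix i c assume "i < dim_row (block_mat q m m (\<lambda>l r. if l = r then 1\<^sub>m q else 0\<^sub>m q q))"
       "c < dim_col (block_mat q m m (\<lambda>l r. if l = r then 1\<^sub>m q else 0\<^sub>m q q))"
    hence ic: "i < m*q" "c < m*q" by (auto simp: block_mat_def)
    have "(i = c) = (i div q = c div q \<and> i mod q = c mod q)"
      by (metis div_mult_mod_eq)
    thus "1\<^sub>m (m * q) $$ (i, c) = block_mat q m m (\<lambda>l r. if l = r then 1\<^sub>m q else 0\<^sub>m q q) $$ (i, c)"
      using ic q by (auto simp: block_mat_def)
  qed (auto simp: block_mat_def)
  hence "emb (1\<^sub>m (m*q)) = (\<Sum>l<m. \<Sum>r<m. J q l * emb (if l = r then 1\<^sub>m q else 0\<^sub>m q q) * adj (J q r))"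
    using emb_block_mat[OF q] by auto
  also have "\<dots> = (\<Sum>l<m. J q l * adj (J q l))"
  proof (rule sum.cong[OF refl])
    fix l assume l: "l \<in> {..<m}"
    have "(\<Sum>r<m. J q l * emb (if l = r then 1\<^sub>m q else 0\<^sub>m q q) * adj (J q r))
      = (\<Sum>r<m. if l = r then J q l * adj (J q r) else 0)"
      by (rule sum.cong[OF refl], auto simp: emb_zero Iq_def[symmetric] J_Iq)
    thus "(\<Sum>r<m. J q l * emb (if l = r then 1\<^sub>m q else 0\<^sub>m q q) * adj (J q r)) = J q l * adj (J q l)"
      using l by (simp add: sum_if_eq')
  qed
  finally show ?thesis unfolding Pm_def .
qed

lemma emb_hcat: assumes X: "X \<in> carrier_mat q (j*q)"
  shows "emb (hcat X (1\<^sub>m q)) = emb X + adj (J q j)"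
  by (rule fm_eqI, insert X, auto simp: ent_emb hcat_def ent_J)

lemma embX_J: assumes X: "X \<in> carrier_mat q (j*q)" and "j \<le> k"
  shows "emb X * J q k = 0"
proof (rule fm_eqI)
  fix i c
  have "j*q \<le> k*q" using assms(2) by (simp add: mult_le_mono1)
  hence "\<not> k*q + c < j*q" by linarith
  thus "ent (emb X * J q k) i c = ent 0 i c" using X by (auto simp: ent_times_J ent_emb)
qed


definition qb :: "nat \<Rightarrow> fm \<Rightarrow> bool" where "qb q x \<longleftrightarrow> Iq q * x = x \<and> x * Iq q = x"

lemma qbD: "qb q x \<Longrightarrow> Iq q * x = x" "qb q x \<Longrightarrow> x * Iq q = x" unfolding qb_def by auto
lemma qb_Iq: "qb q (Iq q)" by (simp add: qb_def Iq_Iq)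
lemma qb_zero: "qb q 0" by (simp add: qb_def)
lemma qb_mult: "qb q x \<Longrightarrow> qb q y \<Longrightarrow> qb q (x*y)"
  unfolding qb_def by (metis mult.assoc)
lemma qb_mult1: "qb q x \<Longrightarrow> Iq q * y * Iq q = y \<Longrightarrow> qb q (x*y)"
  unfolding qb_def by (metis mult.assoc)
lemma qb_add: "qb q x \<Longrightarrow> qb q y \<Longrightarrow> qb q (x+y)" unfolding qb_def by (simp add: algebra_simps)
lemma qb_diff: "qb q x \<Longrightarrow> qb q y \<Longrightarrow> qb q (x-y)" unfolding qb_def by (simp add: algebra_simps)
lemma qb_uminus: "qb q x \<Longrightarrow> qb q (-x)" unfolding qb_def by (simp add: algebra_simps)
lemma qb_scaleR: "qb q x \<Longrightarrow> qb q (c *\<^sub>R x)" unfolding qb_def by simp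
lemma qb_adj: "qb q x \<Longrightarrow> qb q (adj x)" unfolding qb_def
  by (metis adj_Iq adj_times)
lemma qb_sum: "(\<And>k. k \<in> A \<Longrightarrow> qb q (f k)) \<Longrightarrow> qb q (sum f A)"
  unfolding qb_def by (simp add: sum_distrib_left sum_distrib_right)

lemma sum_if_mult: fixes M :: nat shows
  "(\<Sum>l<M. f l * (if l = i then x else (0::fm))) = (if i < M then f i * x else 0)"
  by (induct M) (auto simp: less_Suc_eq)
lemma sum_if_mult2: fixes M :: nat shows
  "(\<Sum>l<M. (if l = i then x else (0::fm)) * f l) = (if i < M then x * f i else 0)"
  by (induct M) (auto simp: less_Suc_eq)

locale gram =
  fixes q :: nat and h :: "nat \<Rightarrow> nat \<Rightarrow> fm"
  assumes hq: "\<And>l k. qb q (h l k)" and hh: "\<And>l k. adj (h l k) = h k l"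
begin

abbreviation I where "I \<equiv> Iq q"

definition invb :: "(nat \<Rightarrow> nat \<Rightarrow> fm) \<Rightarrow> nat \<Rightarrow> bool" where
  "invb Mb m \<longleftrightarrow> (\<forall>l<m. \<forall>i<m. (\<Sum>k<m. Mb l k * h k i) = (if l = i then I else 0))
     \<and> (\<forall>l<m. \<forall>i<m. (\<Sum>k<m. h l k * Mb k i) = (if l = i then I else 0))
     \<and> (\<forall>l<m. \<forall>k<m. qb q (Mb l k))"

lemma invbD: assumes "invb Mb m"
  shows "l < m \<Longrightarrow> i < m \<Longrightarrow> (\<Sum>k<m. Mb l k * h k i) = (if l = i then I else 0)"
    "l < m \<Longrightarrow> i < m \<Longrightarrow> (\<Sum>k<m. h l k * Mb k i) = (if l = i then I else 0)"
    "l < m \<Longrightarrow> k < m \<Longrightarrow> qb q (Mb l k)"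
  using assms unfolding invb_def by auto

definition ob :: "(nat \<Rightarrow> nat \<Rightarrow> fm) \<Rightarrow> nat \<Rightarrow> nat \<Rightarrow> fm" where
  "ob Mb j k = (if k < j then - (\<Sum>l<j. h j l * Mb l k) else if k = j then I else 0)"

definition Dd :: "(nat \<Rightarrow> nat \<Rightarrow> fm) \<Rightarrow> nat \<Rightarrow> fm" where
  "Dd Mb j = (\<Sum>k<Suc j. ob Mb j k * h k j)"

definition kap :: "(nat \<Rightarrow> nat \<Rightarrow> fm) \<Rightarrow> nat \<Rightarrow> (nat \<Rightarrow> fm) \<Rightarrow> nat \<Rightarrow> fm" where
  "kap Nb m c k = (\<Sum>l<m. adj (c l) * Nb l k)"

definition quad :: "(nat \<Rightarrow> nat \<Rightarrow> fm) \<Rightarrow> nat \<Rightarrow> (nat \<Rightarrow> fm) \<Rightarrow> fm" where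
  "quad Nb m c = (\<Sum>k<m. kap Nb m c k * c k)"

lemma ob_qb: assumes "invb Mb j" shows "qb q (ob Mb j k)"
  unfolding ob_def using invbD(3)[OF assms]
  by (auto intro!: qb_uminus qb_sum qb_mult hq simp: qb_Iq qb_zero)

lemma ob_top: "ob Mb j j = I" by (simp add: ob_def)

lemma orth: assumes M: "invb Mb j" and i: "i < j"
  shows "(\<Sum>k<Suc j. ob Mb j k * h k i) = 0"
proof -
  have "(\<Sum>k<j. (\<Sum>l<j. h j l * Mb l k) * h k i) = (\<Sum>k<j. \<Sum>l<j. h j l * Mb l k * h k i)"
    by (simp add: sum_distrib_right)
  also have "\<dots> = (\<Sum>l<j. \<Sum>k<j. h j l * Mb l k * h k i)" by (rule sum.swap)
  also have "\<dots> = (\<Sum>l<j. h j l * (\<Sum>k<j. Mb l k * h k i))"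
    by (simp add: sum_distrib_left mult.assoc)
  also have "\<dots> = (\<Sum>l<j. h j l * (if l = i then I else 0))"
    by (rule sum.cong, auto simp: invbD(1)[OF M] i)
  also have "\<dots> = h j i" using i by (simp add: sum_if_mult qbD[OF hq])
  finally have e: "(\<Sum>k<j. (\<Sum>l<j. h j l * Mb l k) * h k i) = h j i" .
  have "(\<Sum>k<Suc j. ob Mb j k * h k i) = (\<Sum>k<j. - (\<Sum>l<j. h j l * Mb l k) * h k i) + I * h j i"
    by (simp add: ob_def)
  also have "\<dots> = 0" using e by (simp add: sum_negf qbD[OF hq])
  finally show ?thesis .
qed

lemma orth_adj: assumes M: "invb Mb j" and i: "i < j"
  shows "(\<Sum>k<Suc j. h i k * adj (ob Mb j k)) = 0"
proof -
  have "adj (\<Sum>k<Suc j. ob Mb j k * h k i) = 0" using orth[OF assms] by simp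
  thus ?thesis by (simp add: hh)
qed

lemma orth_adj_top:
  shows "(\<Sum>k<Suc j. h j k * adj (ob Mb j k)) = adj (Dd Mb j)"
  unfolding Dd_def by (simp add: hh)

lemma sum_Suc_split: "(\<Sum>k<Suc j. f k) = (\<Sum>k<j. f k) + (f j :: fm)" by simp

lemma D_inv: assumes M: "invb Mb j" and N: "invb Nb (Suc j)"
  shows "Dd Mb j * Nb j j = I" "Nb j j * Dd Mb j = I" "adj (Dd Mb j) = Dd Mb j"
proof -
  have "(\<Sum>k<Suc j. ob Mb j k * (\<Sum>i<Suc j. h k i * Nb i j)) = (\<Sum>k<Suc j. ob Mb j k * (if k = j then I else 0))"
  proof (rule sum.cong[OF refl])
    fix k assume "k \<in> {..<Suc j}"
    thus "ob Mb j k * (\<Sum>i<Suc j. h k i * Nb i j) = ob Mb j k * (if k = j then I else 0)"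
      using invbD(2)[OF N, of k j] by simp
  qed
  also have "\<dots> = I" by (simp add: sum_if_mult ob_top Iq_Iq)
  finally have e1: "(\<Sum>k<Suc j. ob Mb j k * (\<Sum>i<Suc j. h k i * Nb i j)) = I" .
  have "(\<Sum>k<Suc j. ob Mb j k * (\<Sum>i<Suc j. h k i * Nb i j)) = (\<Sum>i<Suc j. (\<Sum>k<Suc j. ob Mb j k * h k i) * Nb i j)"
    by (simp only: sum_distrib_left sum_distrib_right mult.assoc, rule sum.swap)
  also have "\<dots> = (\<Sum>i<Suc j. (if i = j then Dd Mb j else 0) * Nb i j)"
  proof (rule sum.cong[OF refl])
    fix i assume "i \<in> {..<Suc j}"
    thus "(\<Sum>k<Suc j. ob Mb j k * h k i) * Nb i j = (if i = j then Dd Mb j else 0) * Nb i j"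
      using orth[OF M, of i] by (cases "i = j", auto simp: Dd_def)
  qed
  also have "\<dots> = Dd Mb j * Nb j j" by (simp add: sum_if_mult2)
  finally show d1: "Dd Mb j * Nb j j = I" using e1 by simp
  have "(\<Sum>i<Suc j. Nb j i * (\<Sum>k<Suc j. h i k * adj (ob Mb j k))) = (\<Sum>k<Suc j. (\<Sum>i<Suc j. Nb j i * h i k) * adj (ob Mb j k))"
    by (simp only: sum_distrib_left sum_distrib_right mult.assoc, rule sum.swap)
  also have "\<dots> = (\<Sum>k<Suc j. (if j = k then I else 0) * adj (ob Mb j k))"
  proof (rule sum.cong[OF refl])
    fix k assume "k \<in> {..<Suc j}"
    thus "(\<Sum>i<Suc j. Nb j i * h i k) * adj (ob Mb j k) = (if j = k then I else 0) * adj (ob Mb j k)"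
      using invbD(1)[OF N, of j k] by simp
  qed
  also have "\<dots> = I" by (simp add: sum_if_mult2 ob_top adj_Iq Iq_Iq)
  finally have e2: "(\<Sum>i<Suc j. Nb j i * (\<Sum>k<Suc j. h i k * adj (ob Mb j k))) = I" .
  have "(\<Sum>i<Suc j. Nb j i * (\<Sum>k<Suc j. h i k * adj (ob Mb j k))) = (\<Sum>i<Suc j. Nb j i * (if i = j then adj (Dd Mb j) else 0))"
  proof (rule sum.cong[OF refl])
    fix i assume "i \<in> {..<Suc j}"
    thus "Nb j i * (\<Sum>k<Suc j. h i k * adj (ob Mb j k)) = Nb j i * (if i = j then adj (Dd Mb j) else 0)"
      using orth_adj[OF M, of i] orth_adj_top[of j Mb] by (cases "i = j", auto)
  qed
  also have "\<dots> = Nb j j * adj (Dd Mb j)" by (simp add: sum_if_mult)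
  finally have d2: "Nb j j * adj (Dd Mb j) = I" using e2 by simp
  have qD: "qb q (Dd Mb j)" unfolding Dd_def
    by (intro qb_sum qb_mult ob_qb[OF M] hq)
  have "Dd Mb j = Dd Mb j * (Nb j j * adj (Dd Mb j))" using d2 qbD(2)[OF qD] by simp
  also have "\<dots> = adj (Dd Mb j)" using d1 qbD(1)[OF qb_adj[OF qD]] by (simp flip: mult.assoc)
  finally show h: "adj (Dd Mb j) = Dd Mb j" by simp
  show "Nb j j * Dd Mb j = I" using d2 h by simp
qed

end


declare sum.lessThan_Suc[simp del]

context gram begin

lemma kap_prop: assumes N: "invb Nb m" and c: "\<And>k. qb q (c k)" and i: "i < m"
  shows "(\<Sum>k<m. kap Nb m c k * h k i) = adj (c i)"
proof -
  have "(\<Sum>k<m. kap Nb m c k * h k i) = (\<Sum>k<m. \<Sum>l<m. adj (c l) * Nb l k * h k i)"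
    unfolding kap_def by (simp add: sum_distrib_right)
  also have "\<dots> = (\<Sum>l<m. adj (c l) * (\<Sum>k<m. Nb l k * h k i))"
    by (subst sum.swap, simp add: sum_distrib_left mult.assoc)
  also have "\<dots> = (\<Sum>l<m. adj (c l) * (if l = i then I else 0))"
    by (rule sum.cong, auto simp: invbD(1)[OF N] i)
  also have "\<dots> = adj (c i)" using i qbD(2)[OF qb_adj[OF c]] by (simp add: sum_if_mult)
  finally show ?thesis .
qed

lemma kap_qb: assumes N: "invb Nb m" and c: "\<And>k. qb q (c k)" and k: "k < m"
  shows "qb q (kap Nb m c k)"
  unfolding kap_def using invbD(3)[OF N _ k] by (auto intro!: qb_sum qb_mult qb_adj c)

lemma kap_unique: assumes N: "invb Nb m" and c: "\<And>k. qb q (c k)"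
  and f: "\<And>k. k < m \<Longrightarrow> qb q (f k)" and fp: "\<And>i. i < m \<Longrightarrow> (\<Sum>k<m. f k * h k i) = adj (c i)"
  and k: "k < m"
  shows "kap Nb m c k = f k"
proof -
  have "kap Nb m c k = (\<Sum>l<m. (\<Sum>k'<m. f k' * h k' l) * Nb l k)"
    unfolding kap_def by (rule sum.cong, auto simp: fp)
  also have "\<dots> = (\<Sum>k'<m. f k' * (\<Sum>l<m. h k' l * Nb l k))"
    by (simp add: sum_distrib_left sum_distrib_right mult.assoc, rule sum.swap)
  also have "\<dots> = (\<Sum>k'<m. f k' * (if k' = k then I else 0))"
    by (rule sum.cong, auto simp: invbD(2)[OF N] k)
  also have "\<dots> = f k" using k qbD(2)[OF f[OF k]] by (simp add: sum_if_mult)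
  finally show ?thesis .
qed

lemma quad_herm: assumes N: "invb Nb m" and c: "\<And>k. qb q (c k)"
  shows "adj (quad Nb m c) = quad Nb m c"
proof -
  let ?k = "kap Nb m c"
  define X where "X = (\<Sum>k<m. \<Sum>l<m. ?k k * h k l * adj (?k l))"
  have "X = (\<Sum>l<m. (\<Sum>k<m. ?k k * h k l) * adj (?k l))"
    unfolding X_def by (subst sum.swap, simp add: sum_distrib_right)
  also have "\<dots> = (\<Sum>l<m. adj (c l) * adj (?k l))"
    by (rule sum.cong, auto simp: kap_prop[OF N c])
  also have "\<dots> = adj (quad Nb m c)" unfolding quad_def by simp
  finally have X1: "X = adj (quad Nb m c)" .
  have "adj X = (\<Sum>k<m. \<Sum>l<m. ?k l * h l k * adj (?k k))"
    unfolding X_def by (simp add: hh mult.assoc)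
  also have "\<dots> = X" unfolding X_def by (rule sum.swap)
  finally have "adj X = X" .
  hence "quad Nb m c = adj (quad Nb m c)" using X1 by (metis adj_adj)
  thus ?thesis by simp
qed

definition beta :: "(nat \<Rightarrow> nat \<Rightarrow> fm) \<Rightarrow> nat \<Rightarrow> (nat \<Rightarrow> fm) \<Rightarrow> fm" where
  "beta Mb j c = (\<Sum>k<Suc j. ob Mb j k * c k)"

lemma schur: assumes M: "invb Mb j" and N: "invb Nb (Suc j)" and c: "\<And>k. qb q (c k)"
  shows "quad Nb (Suc j) c = quad Mb j c + adj (beta Mb j c) * Nb j j * beta Mb j c"
proof -
  let ?b = "beta Mb j c"
  define f where "f k = (if k < j then kap Mb j c k else 0) + adj ?b * Nb j j * ob Mb j k" for k
  have qbb: "qb q ?b" unfolding beta_def by (intro qb_sum qb_mult ob_qb[OF M] c)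
  have fq: "qb q (f k)" if "k < Suc j" for k
    unfolding f_def using that
    by (auto intro!: qb_add qb_mult qb_adj qbb ob_qb[OF M] kap_qb[OF M c] invbD(3)[OF N] simp: qb_zero)
  define Z where "Z = (\<Sum>k<j. kap Mb j c k * h k j)"
  have Zeq: "Z = - (\<Sum>k'<j. adj (c k') * adj (ob Mb j k'))"
  proof -
    define X where "X = (\<Sum>k<j. \<Sum>k'<Suc j. kap Mb j c k * h k k' * adj (ob Mb j k'))"
    have "X = (\<Sum>k'<Suc j. (\<Sum>k<j. kap Mb j c k * h k k') * adj (ob Mb j k'))"
      unfolding X_def by (subst sum.swap, simp add: sum_distrib_right)
    also have "\<dots> = (\<Sum>k'<j. adj (c k') * adj (ob Mb j k')) + Z * adj (ob Mb j j)"
      unfolding sum.lessThan_Suc Z_def by (simp add: kap_prop[OF M c])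
    also have "\<dots> = (\<Sum>k'<j. adj (c k') * adj (ob Mb j k')) + Z"
      unfolding Z_def by (simp add: ob_top adj_Iq sum_distrib_right mult.assoc qbD(2)[OF hq])
    finally have X1: "X = (\<Sum>k'<j. adj (c k') * adj (ob Mb j k')) + Z" .
    have "X = (\<Sum>k<j. kap Mb j c k * (\<Sum>k'<Suc j. h k k' * adj (ob Mb j k')))"
      unfolding X_def by (simp add: sum_distrib_left mult.assoc)
    also have "\<dots> = 0" by (rule sum.neutral, auto simp: orth_adj[OF M])
    finally show ?thesis using X1 by (simp add: eq_neg_iff_add_eq_0 add.commute)
  qed
  have fp: "(\<Sum>k<Suc j. f k * h k i) = adj (c i)" if i: "i < Suc j" for i
  proof -
    have "(\<Sum>k<Suc j. f k * h k i) = (\<Sum>k<Suc j. (if k < j then kap Mb j c k else 0) * h k i)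
        + adj ?b * Nb j j * (\<Sum>k<Suc j. ob Mb j k * h k i)"
      unfolding f_def by (simp add: distrib_right sum.distrib sum_distrib_left mult.assoc)
    also have "(\<Sum>k<Suc j. (if k < j then kap Mb j c k else 0) * h k i) = (\<Sum>k<j. kap Mb j c k * h k i)"
      unfolding sum.lessThan_Suc by simp
    finally have e: "(\<Sum>k<Suc j. f k * h k i) = (\<Sum>k<j. kap Mb j c k * h k i)
        + adj ?b * Nb j j * (\<Sum>k<Suc j. ob Mb j k * h k i)" .
    show ?thesis
    proof (cases "i < j")
      case True thus ?thesis using e by (simp add: orth[OF M] kap_prop[OF M c])
    next
      case False
      hence ij: "i = j" using i by simp
      have "adj ?b * Nb j j * (\<Sum>k<Suc j. ob Mb j k * h k i) = adj ?b"
        using ij D_inv(2)[OF M N] qbD(2)[OF qb_adj[OF qbb]] by (simp add: Dd_def mult.assoc)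
      hence "(\<Sum>k<Suc j. f k * h k i) = Z + adj ?b" using e ij Z_def by simp
      also have "adj ?b = (\<Sum>k<j. adj (c k) * adj (ob Mb j k)) + adj (c j)"
        unfolding beta_def sum.lessThan_Suc using qbD(2)[OF qb_adj[OF c]] by (simp add: ob_top adj_Iq)
      finally show ?thesis using Zeq ij by simp
    qed
  qed
  have kf: "kap Nb (Suc j) c k = f k" if "k < Suc j" for k
    by (rule kap_unique[OF N c fq fp that])
  have "quad Nb (Suc j) c = (\<Sum>k<Suc j. f k * c k)"
    unfolding quad_def by (rule sum.cong, auto simp: kf)
  also have "\<dots> = (\<Sum>k<Suc j. (if k < j then kap Mb j c k else 0) * c k) + adj ?b * Nb j j * ?b"
    unfolding f_def beta_def by (simp add: distrib_right sum.distrib sum_distrib_left mult.assoc)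
  also have "(\<Sum>k<Suc j. (if k < j then kap Mb j c k else 0) * c k) = quad Mb j c"
    unfolding quad_def sum.lessThan_Suc by simp
  finally show ?thesis .
qed

end

declare sum.lessThan_Suc[simp del]

definition WL :: "real \<Rightarrow> (nat \<Rightarrow> fm) \<Rightarrow> nat \<Rightarrow> nat \<Rightarrow> fm" where
  "WL a g m k = (\<Sum>t<m-k. a^t *\<^sub>R g (Suc (k+t)))"

lemma WL_Suc: "k \<le> m \<Longrightarrow> WL a g (Suc m) k = WL a g m k + a^(m-k) *\<^sub>R g (Suc m)"
  unfolding WL_def by (simp add: Suc_diff_le sum.lessThan_Suc)

lemma WL_self: "WL a g m m = 0" unfolding WL_def by simp

lemma tele: "(\<Sum>k<Suc m. a^(m-k) *\<^sub>R (x (Suc k) - a *\<^sub>R x k)) = x (Suc m) - a^(Suc m) *\<^sub>R (x 0 :: fm)"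
proof (induct m)
  case 0 thus ?case by (simp add: sum.lessThan_Suc)
next
  case (Suc m)
  have "(\<Sum>k<Suc (Suc m). a^(Suc m-k) *\<^sub>R (x (Suc k) - a *\<^sub>R x k))
     = (\<Sum>k<Suc m. a *\<^sub>R (a^(m-k) *\<^sub>R (x (Suc k) - a *\<^sub>R x k))) + (x (Suc (Suc m)) - a *\<^sub>R x (Suc m))"
    unfolding sum.lessThan_Suc[of _ "Suc m"] by (simp add: Suc_diff_le)
  also have "\<dots> = a *\<^sub>R (x (Suc m) - a^(Suc m) *\<^sub>R x 0) + (x (Suc (Suc m)) - a *\<^sub>R x (Suc m))"
    by (subst scaleR_sum_right[symmetric], subst Suc, rule refl)
  also have "\<dots> = x (Suc (Suc m)) - a^(Suc (Suc m)) *\<^sub>R x 0" by (simp add: algebra_simps)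
  finally show ?case .
qed

lemma TLL: "(\<Sum>i<Suc m. g i * (x i - a^i *\<^sub>R x 0)) = (\<Sum>k<m. WL a g m k * (x (Suc k) - a *\<^sub>R (x k :: fm)))"
proof (induct m)
  case 0 thus ?case by (simp add: sum.lessThan_Suc)
next
  case (Suc m)
  have "(\<Sum>k<Suc m. WL a g (Suc m) k * (x (Suc k) - a *\<^sub>R x k))
     = (\<Sum>k<Suc m. WL a g m k * (x (Suc k) - a *\<^sub>R x k)) + (\<Sum>k<Suc m. g (Suc m) * (a^(m-k) *\<^sub>R (x (Suc k) - a *\<^sub>R x k)))"
    by (simp add: WL_Suc distrib_right sum.distrib)
  also have "(\<Sum>k<Suc m. WL a g m k * (x (Suc k) - a *\<^sub>R x k)) = (\<Sum>k<m. WL a g m k * (x (Suc k) - a *\<^sub>R x k))"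
    by (simp add: sum.lessThan_Suc WL_self)
  also have "(\<Sum>k<Suc m. g (Suc m) * (a^(m-k) *\<^sub>R (x (Suc k) - a *\<^sub>R x k))) = g (Suc m) * (x (Suc m) - a^(Suc m) *\<^sub>R x 0)"
    by (subst sum_distrib_left[symmetric], subst tele, rule refl)
  finally show ?case using Suc by (simp add: sum.lessThan_Suc[of _ "Suc m"])
qed

lemma TLR: "(\<Sum>i<Suc m. (x i - a^i *\<^sub>R x 0) * g i) = (\<Sum>k<m. (x (Suc k) - a *\<^sub>R (x k :: fm)) * WL a g m k)"
proof (induct m)
  case 0 thus ?case by (simp add: sum.lessThan_Suc)
next
  case (Suc m)
  have "(\<Sum>k<Suc m. (x (Suc k) - a *\<^sub>R x k) * WL a g (Suc m) k)
     = (\<Sum>k<Suc m. (x (Suc k) - a *\<^sub>R x k) * WL a g m k) + (\<Sum>k<Suc m. (a^(m-k) *\<^sub>R (x (Suc k) - a *\<^sub>R x k)) * g (Suc m))"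
    by (simp add: WL_Suc distrib_left sum.distrib)
  also have "(\<Sum>k<Suc m. (x (Suc k) - a *\<^sub>R x k) * WL a g m k) = (\<Sum>k<m. (x (Suc k) - a *\<^sub>R x k) * WL a g m k)"
    by (simp add: sum.lessThan_Suc WL_self)
  also have "(\<Sum>k<Suc m. (a^(m-k) *\<^sub>R (x (Suc k) - a *\<^sub>R x k)) * g (Suc m)) = (x (Suc m) - a^(Suc m) *\<^sub>R x 0) * g (Suc m)"
    by (subst sum_distrib_right[symmetric], subst tele, rule refl)
  finally show ?case using Suc by (simp add: sum.lessThan_Suc[of _ "Suc m"])
qed

definition hK :: "(nat \<Rightarrow> fm) \<Rightarrow> nat \<Rightarrow> nat \<Rightarrow> fm" where "hK r l k = r (l+k)"
definition hH :: "real \<Rightarrow> (nat \<Rightarrow> fm) \<Rightarrow> nat \<Rightarrow> nat \<Rightarrow> fm" where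
  "hH a r l k = r (Suc (l+k)) - a *\<^sub>R r (l+k)"

locale core =
  fixes q :: nat and r :: "nat \<Rightarrow> fm" and a :: real
  assumes rq: "\<And>k. qb q (r k)" and rh: "\<And>k. adj (r k) = r k"
begin

sublocale K: gram q "hK r"
  by (unfold_locales, auto simp: hK_def rq rh add.commute)

sublocale H: gram q "hH a r"
  by (unfold_locales, auto simp: hH_def rq rh add.commute intro!: qb_diff qb_scaleR)

end

context gram begin
lemma Dd_herm: assumes M: "invb Mb j" shows "adj (Dd Mb j) = Dd Mb j"
proof -
  define X where "X = (\<Sum>k<Suc j. \<Sum>l<Suc j. ob Mb j k * h k l * adj (ob Mb j l))"
  have "X = (\<Sum>l<Suc j. (\<Sum>k<Suc j. ob Mb j k * h k l) * adj (ob Mb j l))"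
    unfolding X_def by (subst sum.swap, simp add: sum_distrib_right)
  also have "\<dots> = (\<Sum>l<Suc j. (if l = j then Dd Mb j else 0) * adj (ob Mb j l))"
  proof (rule sum.cong[OF refl])
    fix l assume "l \<in> {..<Suc j}"
    thus "(\<Sum>k<Suc j. ob Mb j k * h k l) * adj (ob Mb j l) = (if l = j then Dd Mb j else 0) * adj (ob Mb j l)"
      using orth[OF M, of l] by (cases "l = j", auto simp: Dd_def)
  qed
  also have "\<dots> = Dd Mb j * adj (ob Mb j j)" by (simp add: sum_if_mult2)
  also have "\<dots> = Dd Mb j"
  proof -
    have "qb q (Dd Mb j)" unfolding Dd_def by (intro qb_sum qb_mult ob_qb[OF M] hq)
    thus ?thesis by (simp add: ob_top adj_Iq qbD)
  qed
  finally have X1: "X = Dd Mb j" .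
  have "adj X = X" unfolding X_def by (simp add: hh mult.assoc, rule sum.swap)
  thus ?thesis using X1 by simp
qed
end


declare sum.lessThan_Suc[simp del]

context core begin

lemma TLR_r: "(\<Sum>l<Suc j. hK r k l * g l) - r k * (\<Sum>l<Suc j. a^l *\<^sub>R g l)
   = (\<Sum>l<j. hH a r k l * WL a g j l)"
proof -
  have "(\<Sum>l<Suc j. hK r k l * g l) - r k * (\<Sum>l<Suc j. a^l *\<^sub>R g l)
      = (\<Sum>l<Suc j. (r (k+l) - a^l *\<^sub>R r (k+0)) * g l)"
    by (simp add: hK_def sum_distrib_left left_diff_distrib sum_subtractf)
  also have "\<dots> = (\<Sum>l<j. (r (k + Suc l) - a *\<^sub>R r (k+l)) * WL a g j l)"
    using TLR[where x="\<lambda>l. r (k+l)" and g=g and a=a and m=j] by simp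
  also have "\<dots> = (\<Sum>l<j. hH a r k l * WL a g j l)" by (simp add: hH_def)
  finally show ?thesis .
qed

lemma TLL_r: "(\<Sum>l<Suc j. g l * hK r l k) - (\<Sum>l<Suc j. a^l *\<^sub>R g l) * r k
   = (\<Sum>l<j. WL a g j l * hH a r l k)"
proof -
  have "(\<Sum>l<Suc j. g l * hK r l k) - (\<Sum>l<Suc j. a^l *\<^sub>R g l) * r k
      = (\<Sum>l<Suc j. g l * (r (l+k) - a^l *\<^sub>R r (0+k)))"
    by (simp add: hK_def sum_distrib_right right_diff_distrib sum_subtractf)
  also have "\<dots> = (\<Sum>l<j. WL a g j l * (r (Suc l + k) - a *\<^sub>R r (l+k)))"
    using TLL[where x="\<lambda>l. r (l+k)" and g=g and a=a and m=j] by simp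
  also have "\<dots> = (\<Sum>l<j. WL a g j l * hH a r l k)" by (simp add: hH_def)
  finally show ?thesis .
qed

lemma I3: assumes M1: "K.invb Mb1 j" and M2: "H.invb Mb2 j"
  shows "(\<Sum>k<Suc j. H.ob Mb2 j k * r k) * adj (\<Sum>l<Suc j. a^l *\<^sub>R K.ob Mb1 j l) = K.Dd Mb1 j"
proof -
  let ?G = "K.ob Mb1 j" and ?P = "H.ob Mb2 j"
  define PG where "PG = (\<Sum>k<Suc j. ?P k * (\<Sum>l<Suc j. hK r k l * adj (?G l)))"
  have "PG = (\<Sum>k<Suc j. ?P k * (if k = j then adj (K.Dd Mb1 j) else 0))"
    unfolding PG_def
  proof (rule sum.cong[OF refl])
    fix k assume "k \<in> {..<Suc j}"
    thus "?P k * (\<Sum>l<Suc j. hK r k l * adj (?G l)) = ?P k * (if k = j then adj (K.Dd Mb1 j) else 0)"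
      using K.orth_adj[OF M1, of k] K.orth_adj_top[of j Mb1] by (cases "k = j", auto)
  qed
  also have "\<dots> = adj (K.Dd Mb1 j)"
  proof -
    have "qb q (K.Dd Mb1 j)" unfolding K.Dd_def by (intro qb_sum qb_mult K.ob_qb[OF M1] K.hq)
    thus ?thesis by (simp add: sum_if_mult H.ob_top qbD qb_adj)
  qed
  finally have PG1: "PG = K.Dd Mb1 j" using K.Dd_herm[OF M1] by simp
  have "PG - (\<Sum>k<Suc j. ?P k * r k) * adj (\<Sum>l<Suc j. a^l *\<^sub>R ?G l)
     = (\<Sum>k<Suc j. ?P k * ((\<Sum>l<Suc j. hK r k l * adj (?G l)) - r k * (\<Sum>l<Suc j. a^l *\<^sub>R adj (?G l))))"
    unfolding PG_def by (simp add: sum_distrib_right right_diff_distrib sum_subtractf mult.assoc)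
  also have "\<dots> = (\<Sum>k<Suc j. ?P k * (\<Sum>l<j. hH a r k l * WL a (\<lambda>l. adj (?G l)) j l))"
    by (simp add: TLR_r)
  also have "\<dots> = (\<Sum>l<j. (\<Sum>k<Suc j. ?P k * hH a r k l) * WL a (\<lambda>l. adj (?G l)) j l)"
    by (simp add: sum_distrib_left sum_distrib_right mult.assoc, rule sum.swap)
  also have "\<dots> = 0" by (rule sum.neutral, auto simp: H.orth[OF M2])
  finally show ?thesis using PG1 by simp
qed

lemma I4: assumes M1: "K.invb Mb1 (Suc j)" and M2: "H.invb Mb2 j"
  shows "(\<Sum>l<Suc (Suc j). a^l *\<^sub>R K.ob Mb1 (Suc j) l) * adj (\<Sum>k<Suc j. H.ob Mb2 j k * r k) = - H.Dd Mb2 j"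
proof -
  let ?G = "K.ob Mb1 (Suc j)" and ?P = "H.ob Mb2 j"
  define GP where "GP = (\<Sum>k<Suc j. (\<Sum>l<Suc (Suc j). ?G l * hK r l k) * adj (?P k))"
  have GP0: "GP = 0" unfolding GP_def by (rule sum.neutral, auto simp: K.orth[OF M1])
  have "GP - (\<Sum>l<Suc (Suc j). a^l *\<^sub>R ?G l) * adj (\<Sum>k<Suc j. ?P k * r k)
     = (\<Sum>k<Suc j. ((\<Sum>l<Suc (Suc j). ?G l * hK r l k) - (\<Sum>l<Suc (Suc j). a^l *\<^sub>R ?G l) * r k) * adj (?P k))"
    unfolding GP_def by (simp add: sum_distrib_left left_diff_distrib sum_subtractf mult.assoc rh)
  also have "\<dots> = (\<Sum>k<Suc j. (\<Sum>l<Suc j. WL a ?G (Suc j) l * hH a r l k) * adj (?P k))"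
    by (simp add: TLL_r)
  also have "\<dots> = (\<Sum>l<Suc j. WL a ?G (Suc j) l * (\<Sum>k<Suc j. hH a r l k * adj (?P k)))"
    by (simp add: sum_distrib_left sum_distrib_right mult.assoc, rule sum.swap)
  also have "\<dots> = (\<Sum>l<Suc j. WL a ?G (Suc j) l * (if l = j then adj (H.Dd Mb2 j) else 0))"
  proof (rule sum.cong[OF refl])
    fix l assume "l \<in> {..<Suc j}"
    thus "WL a ?G (Suc j) l * (\<Sum>k<Suc j. hH a r l k * adj (?P k)) = WL a ?G (Suc j) l * (if l = j then adj (H.Dd Mb2 j) else 0)"
      using H.orth_adj[OF M2, of l] H.orth_adj_top[of j Mb2] by (cases "l = j", auto)
  qed
  also have "\<dots> = WL a ?G (Suc j) j * adj (H.Dd Mb2 j)" by (simp add: sum_if_mult)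
  also have "WL a ?G (Suc j) j = Iq q" by (simp add: WL_def K.ob_top sum.lessThan_Suc)
  also have "Iq q * adj (H.Dd Mb2 j) = H.Dd Mb2 j"
  proof -
    have "qb q (H.Dd Mb2 j)" unfolding H.Dd_def by (intro qb_sum qb_mult H.ob_qb[OF M2] H.hq)
    thus ?thesis using H.Dd_herm[OF M2] by (simp add: qbD)
  qed
  finally show ?thesis using GP0 by (simp add: minus_equation_iff)
qed

end

declare sum.lessThan_Suc[simp del]

context core begin

lemma I5: assumes N1: "K.invb Nb (Suc j)" and M2: "H.invb Mb2 j"
  shows "(\<Sum>l<Suc j. a^l *\<^sub>R H.ob Mb2 j l)
     = (\<Sum>k<Suc j. H.ob Mb2 j k * r k) * K.quad Nb (Suc j) (\<lambda>k. a^k *\<^sub>R Iq q)"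
proof -
  let ?P = "H.ob Mb2 j" and ?c = "\<lambda>k. a^k *\<^sub>R Iq q"
  let ?k = "K.kap Nb (Suc j) ?c"
  have cq: "\<And>k. qb q (?c k)" by (intro qb_scaleR qb_Iq)
  have kq: "\<And>k. k < Suc j \<Longrightarrow> qb q (?k k)" by (rule K.kap_qb[OF N1 cq])
  have Pq: "\<And>k. qb q (?P k)" by (rule H.ob_qb[OF M2])
  have mu: "K.quad Nb (Suc j) ?c = (\<Sum>k<Suc j. a^k *\<^sub>R ?k k)"
    unfolding K.quad_def by (rule sum.cong, auto simp: qbD[OF kq])
  define KP where "KP = (\<Sum>l<Suc j. (\<Sum>k<Suc j. ?k k * hK r k l) * adj (?P l))"
  have "KP = (\<Sum>l<Suc j. (a^l *\<^sub>R Iq q) * adj (?P l))"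
    unfolding KP_def by (rule sum.cong, auto simp: K.kap_prop[OF N1 cq] adj_Iq)
  also have "\<dots> = adj (\<Sum>l<Suc j. a^l *\<^sub>R ?P l)"
    by (simp add: qbD[OF qb_adj[OF Pq]])
  finally have KP1: "KP = adj (\<Sum>l<Suc j. a^l *\<^sub>R ?P l)" .
  have "KP - K.quad Nb (Suc j) ?c * adj (\<Sum>k<Suc j. ?P k * r k)
     = (\<Sum>l<Suc j. ((\<Sum>k<Suc j. ?k k * hK r k l) - (\<Sum>k<Suc j. a^k *\<^sub>R ?k k) * r l) * adj (?P l))"
    unfolding KP_def mu by (simp add: sum_distrib_left left_diff_distrib sum_subtractf mult.assoc rh)
  also have "\<dots> = (\<Sum>l<Suc j. (\<Sum>k<j. WL a ?k j k * hH a r k l) * adj (?P l))"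
    by (simp add: TLL_r)
  also have "\<dots> = (\<Sum>k<j. WL a ?k j k * (\<Sum>l<Suc j. hH a r k l * adj (?P l)))"
    by (simp add: sum_distrib_left sum_distrib_right mult.assoc, rule sum.swap)
  also have "\<dots> = 0" by (rule sum.neutral, auto simp: H.orth_adj[OF M2])
  finally have "adj (\<Sum>l<Suc j. a^l *\<^sub>R ?P l) = K.quad Nb (Suc j) ?c * adj (\<Sum>k<Suc j. ?P k * r k)"
    using KP1 by simp
  hence "(\<Sum>l<Suc j. a^l *\<^sub>R ?P l) = adj (K.quad Nb (Suc j) ?c * adj (\<Sum>k<Suc j. ?P k * r k))"
    by (metis adj_adj)
  also have "\<dots> = (\<Sum>k<Suc j. ?P k * r k) * K.quad Nb (Suc j) ?c"
    by (simp only: adj_times adj_adj K.quad_herm[OF N1 cq])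
  finally show ?thesis .
qed

lemma I6: assumes M1: "K.invb Mb1 j" and M2: "H.invb Mb2 j"
  and s0: "\<sigma> 0 = s0" and sr: "\<And>k. k < j \<Longrightarrow> \<sigma> (Suc k) - a *\<^sub>R \<sigma> k = - r k"
  shows "(\<Sum>i<Suc j. K.ob Mb1 j i * \<sigma> i) = (\<Sum>l<Suc j. a^l *\<^sub>R K.ob Mb1 j l) * (s0 + H.quad Mb2 j r)"
proof -
  let ?G = "K.ob Mb1 j" and ?k = "H.kap Mb2 j r"
  let ?g = "\<Sum>l<Suc j. a^l *\<^sub>R K.ob Mb1 j l"
  let ?W = "WL a ?G j"
  have "(\<Sum>i<Suc j. ?G i * (\<sigma> i - a^i *\<^sub>R \<sigma> 0)) = (\<Sum>k<j. ?W k * (\<sigma> (Suc k) - a *\<^sub>R \<sigma> k))"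
    by (rule TLL)
  also have "\<dots> = - (\<Sum>k<j. ?W k * r k)" by (simp add: sr sum_negf)
  finally have e1: "(\<Sum>i<Suc j. ?G i * \<sigma> i) = ?g * s0 - (\<Sum>k<j. ?W k * r k)"
    by (simp add: s0 right_diff_distrib sum_subtractf sum_distrib_right algebra_simps)
  have rk: "r k = (\<Sum>l<j. hH a r k l * adj (?k l))" if "k < j" for k
  proof -
    have "r k = adj (\<Sum>l<j. ?k l * hH a r l k)" using H.kap_prop[OF M2 rq that] by (simp add: rh)
    thus ?thesis by (simp add: H.hh)
  qed
  have "(\<Sum>k<j. ?W k * r k) = (\<Sum>k<j. \<Sum>l<j. ?W k * hH a r k l * adj (?k l))"
    by (rule sum.cong, auto simp: rk sum_distrib_left mult.assoc)
  also have "\<dots> = (\<Sum>l<j. (\<Sum>k<j. ?W k * hH a r k l) * adj (?k l))"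
    by (subst sum.swap, simp add: sum_distrib_right)
  also have "\<dots> = (\<Sum>l<j. (- (?g * r l)) * adj (?k l))"
  proof (rule sum.cong[OF refl])
    fix l assume l: "l \<in> {..<j}"
    have "(\<Sum>k<j. ?W k * hH a r k l) = (\<Sum>i<Suc j. ?G i * hK r i l) - ?g * r l"
      by (simp add: TLL_r)
    also have "\<dots> = - (?g * r l)" using K.orth[OF M1, of l] l by (simp add: hK_def)
    finally show "(\<Sum>k<j. ?W k * hH a r k l) * adj (?k l) = (- (?g * r l)) * adj (?k l)" by simp
  qed
  also have "\<dots> = - (?g * adj (\<Sum>l<j. ?k l * r l))"
    by (simp add: sum_negf sum_distrib_left mult.assoc rh)
  also have "adj (\<Sum>l<j. ?k l * r l) = H.quad Mb2 j r"
    using H.quad_herm[OF M2 rq] unfolding H.quad_def .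
  finally have e2: "(\<Sum>k<j. ?W k * r k) = - (?g * H.quad Mb2 j r)" .
  show ?thesis using e1 e2 by (simp add: distrib_left)
qed

end

declare sum.lessThan_Suc[simp del]

definition BM :: "nat \<Rightarrow> (nat \<Rightarrow> nat \<Rightarrow> fm) \<Rightarrow> nat \<Rightarrow> fm" where
  "BM q h m = (\<Sum>l<m. \<Sum>k<m. J q l * h l k * adj (J q k))"

lemma BM_J: assumes hq: "\<And>l. qb q (h l i)" and i: "i < m"
  shows "BM q h m * J q i = (\<Sum>l<m. J q l * h l i)"
proof -
  have "BM q h m * J q i = (\<Sum>l<m. \<Sum>k<m. J q l * h l k * (adj (J q k) * J q i))"
    unfolding BM_def by (simp add: sum_distrib_right mult.assoc)
  also have "\<dots> = (\<Sum>l<m. \<Sum>k<m. (if k = i then J q l * h l k * Iq q else 0))"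
    by (simp add: adjJ_J if_distrib[of "\<lambda>x. _ * x"] cong: if_cong)
  also have "\<dots> = (\<Sum>l<m. J q l * h l i)" using i by (simp add: sum_if_eq mult.assoc qbD(2)[OF hq])
  finally show ?thesis .
qed

lemma JBM: assumes hq: "\<And>k. qb q (h i k)" and i: "i < m"
  shows "adj (J q i) * BM q h m = (\<Sum>k<m. h i k * adj (J q k))"
proof -
  have "adj (J q i) * BM q h m = (\<Sum>l<m. \<Sum>k<m. (adj (J q i) * J q l) * h l k * adj (J q k))"
    unfolding BM_def by (simp add: sum_distrib_left mult.assoc)
  also have "\<dots> = (\<Sum>k<m. \<Sum>l<m. (if l = i then Iq q * h l k * adj (J q k) else 0))"
    by (subst sum.swap, simp add: adjJ_J if_distrib[of "\<lambda>x. x * _"] cong: if_cong)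
  also have "\<dots> = (\<Sum>k<m. h i k * adj (J q k))" using i by (simp add: sum_if_eq qbD(1)[OF hq])
  finally show ?thesis .
qed

lemma Pm_J: "i < m \<Longrightarrow> Pm q m * J q i = J q i"
  unfolding Pm_def by (simp add: sum_distrib_right mult.assoc adjJ_J if_distrib[of "\<lambda>x. _ * x"]
      sum_if_eq J_Iq cong: if_cong)

lemma adjJ_Pm: "i < m \<Longrightarrow> adj (J q i) * Pm q m = adj (J q i)"
  unfolding Pm_def by (simp add: sum_distrib_left mult.assoc[symmetric] adjJ_J if_distrib[of "\<lambda>x. x * _"]
      sum_if_eq' Iq_adjJ cong: if_cong)

lemma adjJ_Pm_J: "l < m \<Longrightarrow> i < m \<Longrightarrow> adj (J q l) * Pm q m * J q i = (if l = i then Iq q else 0)"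
  by (simp add: adjJ_Pm adjJ_J)

lemma qb_JXJ: "qb q (adj (J q l) * X * J q k)"
  unfolding qb_def by (simp add: mult.assoc[symmetric] Iq_adjJ, simp add: mult.assoc J_Iq)

lemma invb_from: assumes hg: "gram q h"
  and X1: "X * BM q h m = Pm q m" and X2: "BM q h m * X = Pm q m"
  shows "gram.invb q h (\<lambda>l k. adj (J q l) * X * J q k) m"
proof -
  interpret gram q h by fact
  show ?thesis unfolding invb_def
  proof (intro conjI allI impI)
    fix l i assume l: "l < m" and i: "i < m"
    have "(\<Sum>k<m. adj (J q l) * X * J q k * h k i) = adj (J q l) * X * (BM q h m * J q i)"
      by (simp add: BM_J[OF hq i] sum_distrib_left mult.assoc)
    also have "\<dots> = adj (J q l) * Pm q m * J q i" using X1 by (metis mult.assoc)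
    finally show "(\<Sum>k<m. adj (J q l) * X * J q k * h k i) = (if l = i then I else 0)"
      using adjJ_Pm_J[OF l i] by simp
    have "(\<Sum>k<m. h l k * (adj (J q k) * X * J q i)) = (adj (J q l) * BM q h m) * X * J q i"
      by (simp add: JBM[OF hq l] sum_distrib_right mult.assoc)
    also have "\<dots> = adj (J q l) * Pm q m * J q i" using X2 by (simp add: mult.assoc)
    finally show "(\<Sum>k<m. h l k * (adj (J q k) * X * J q i)) = (if l = i then I else 0)"
      using adjJ_Pm_J[OF l i] by simp
  next
    fix l k show "qb q (adj (J q l) * X * J q k)" by (rule qb_JXJ)
  qed
qed

lemma minv_prop: assumes A: "A \<in> carrier_mat n n" and B: "B \<in> carrier_mat n n"
  and AB: "A * B = 1\<^sub>m n" and BA: "B * A = 1\<^sub>m n"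
  shows "minv A \<in> carrier_mat n n \<and> A * minv A = 1\<^sub>m n \<and> minv A * A = 1\<^sub>m n"
proof -
  have "\<exists>B. B \<in> carrier_mat (dim_col A) (dim_row A) \<and> A * B = 1\<^sub>m (dim_row A) \<and> B * A = 1\<^sub>m (dim_col A)"
    using A B AB BA by auto
  from someI_ex[OF this] show ?thesis using A unfolding minv_def by auto
qed

lemma det_minv: assumes A: "(A :: complex mat) \<in> carrier_mat n n" and d: "det A \<noteq> 0"
  shows "minv A \<in> carrier_mat n n \<and> A * minv A = 1\<^sub>m n \<and> minv A * A = 1\<^sub>m n"
proof -
  have "A \<in> Units (ring_mat TYPE(complex) n ())" by (rule det_non_zero_imp_unit[OF A d])
  then obtain B where B: "B \<in> carrier_mat n n" "A * B = 1\<^sub>m n" "B * A = 1\<^sub>m n"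
    unfolding Units_def by (auto simp: ring_mat_def)
  show ?thesis by (rule minv_prop[OF A B])
qed

lemma minv_emb: assumes A: "A \<in> carrier_mat n n" and d: "det A \<noteq> 0" and q: "0 < q" and n: "n = m*q"
  shows "emb (minv A) * emb A = Pm q m" "emb A * emb (minv A) = Pm q m"
proof -
  from det_minv[OF A d] have M: "minv A \<in> carrier_mat n n" "A * minv A = 1\<^sub>m n" "minv A * A = 1\<^sub>m n"
    by auto
  show "emb (minv A) * emb A = Pm q m"
    using M A by (simp add: emb_mult[symmetric] emb_one_block[OF q] n)
  show "emb A * emb (minv A) = Pm q m"
    using M A by (simp add: emb_mult[symmetric] emb_one_block[OF q] n)
qed


lemma pd_sub: assumes pd: "pos_def A" and A: "A \<in> carrier_mat N N" and B: "B \<in> carrier_mat m m"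
  and mN: "m \<le> N" and eq: "\<And>i k. i < m \<Longrightarrow> k < m \<Longrightarrow> B $$ (i,k) = A $$ (i,k)"
  shows "det B \<noteq> 0"
proof
  assume "det B = 0"
  then obtain v where v: "v \<in> carrier_vec m" "v \<noteq> 0\<^sub>v m" "B *\<^sub>v v = 0\<^sub>v m"
    using det_0_iff_vec_prod_zero[OF B] by auto
  define w where "w = vec N (\<lambda>i. if i < m then v $ i else (0::complex))"
  have w: "w \<in> carrier_vec N" unfolding w_def by simp
  have wne: "w \<noteq> 0\<^sub>v N"
  proof
    assume "w = 0\<^sub>v N"
    have "\<And>i. i < m \<Longrightarrow> v $ i = 0"
    proof -
      fix i assume i: "i < m"
      hence iN: "i < N" using mN by simp
      have "w $ i = 0" using \<open>w = 0\<^sub>v N\<close> iN by simp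
      thus "v $ i = 0" using i iN unfolding w_def by simp
    qed
    hence "v = 0\<^sub>v m" using v(1) by (intro eq_vecI, auto)
    thus False using v(2) by simp
  qed
  have Aw: "(A *\<^sub>v w) $ i = 0" if i: "i < m" for i
  proof -
    have dw: "dim_vec w = N" by (simp add: w_def)
    have "(A *\<^sub>v w) $ i = (\<Sum>t\<in>{0..<N}. A $$ (i,t) * w $ t)"
    proof -
      have dA: "dim_row A = N" "dim_col A = N" using A by auto
      have iN: "i < N" using i mN by simp
      show ?thesis using iN by (simp add: dA scalar_prod_def dw)
    qed
    also have "\<dots> = (\<Sum>t\<in>{0..<m}. A $$ (i,t) * w $ t)"
      by (rule sum.mono_neutral_right, insert mN, auto simp: w_def)
    also have "\<dots> = (\<Sum>t\<in>{0..<m}. B $$ (i,t) * v $ t)"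
      by (rule sum.cong, insert mN i, auto simp: w_def eq)
    also have "\<dots> = (B *\<^sub>v v) $ i" using B v(1) i by (simp add: scalar_prod_def)
    finally show ?thesis using v(3) i by simp
  qed
  have "conjugate w \<bullet> (A *\<^sub>v w) = (\<Sum>i\<in>{0..<N}. conjugate (w $ i) * (A *\<^sub>v w) $ i)"
    using A w by (simp add: scalar_prod_def)
  also have "\<dots> = 0"
  proof (rule sum.neutral, intro ballI)
    fix i assume "i \<in> {0..<N}"
    thus "conjugate (w $ i) * (A *\<^sub>v w) $ i = 0" by (cases "i < m", simp add: Aw, simp add: w_def)
  qed
  finally have "Re (conjugate w \<bullet> (A *\<^sub>v w)) = 0" by simp
  moreover have "Re (conjugate w \<bullet> (A *\<^sub>v w)) > 0"
    using pd w wne A unfolding pos_def_def by auto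
  ultimately show False by simp
qed

lemma prod_list_ones: "(\<And>x. x \<in> set xs \<Longrightarrow> x = 1) \<Longrightarrow> prod_list xs = (1::'a::monoid_mult)"
  by (induct xs, auto)

lemma Tm_entry: assumes "i \<le> k" "i < (j+1)*q" "k < (j+1)*q"
  shows "Tm q j $$ (i,k) = 0"
proof -
  have "i div q \<le> k div q" using assms(1) by (rule div_le_mono)
  moreover have "0 < q" using assms(2) by (cases q, auto)
  ultimately show ?thesis using assms unfolding Tm_def block_mat_def by simp
qed

lemma IT_det: "det (1\<^sub>m ((j+1)*q) - z \<cdot>\<^sub>m Tm q j) = 1"
proof -
  define N where "N = (j+1)*q"
  let ?A = "1\<^sub>m N - z \<cdot>\<^sub>m Tm q j"
  have dT: "Tm q j \<in> carrier_mat N N" by (auto simp: Tm_def block_mat_def N_def)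
  have c: "?A \<in> carrier_mat N N" using dT by auto
  have ent: "?A $$ (i,k) = (if i = k then 1 else 0)" if "i \<le> k" "i < N" "k < N" for i k
    using that dT Tm_entry[of i k j q] unfolding N_def by simp
  have "det ?A = prod_list (diag_mat ?A)"
    by (rule det_lower_triangular[OF _ c], subst ent, auto)
  also have "\<dots> = 1"
  proof (rule prod_list_ones)
    fix x assume "x \<in> set (diag_mat ?A)"
    then obtain i where "i < N" "x = ?A $$ (i,i)" using c unfolding diag_mat_def by auto
    thus "x = 1" using ent[of i i] by simp
  qed
  finally show ?thesis unfolding N_def .
qed


declare sum.lessThan_Suc[simp del]

locale hyp =
  fixes q n :: nat and a b :: real and s :: "nat \<Rightarrow> complex mat"
  assumes q1: "q \<ge> 1" and n1: "n \<ge> 1"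
    and sc: "\<And>j. j \<le> 2*n+1 \<Longrightarrow> s j \<in> carrier_mat q q \<and> hermitian (s j)"
    and pdH: "pos_def (H2 q a b s (n-1))" and pdK: "pos_def (K1 q b s n)"
begin

lemma qpos: "0 < q" using q1 by simp

definition se :: "nat \<Rightarrow> fm" where "se k = emb (s k)"

lemma s_car: "k \<le> 2*n+1 \<Longrightarrow> s k \<in> carrier_mat q q" using sc by auto

lemma se_qb: "k \<le> 2*n+1 \<Longrightarrow> qb q (se k)"
  unfolding se_def qb_def using s_car by (simp add: emb_Iq' emb_Iq2')

lemma se_adj: "k \<le> 2*n+1 \<Longrightarrow> adj (se k) = se k"
  unfolding se_def using sc[of k] by (simp add: emb_adj[symmetric] hermitian_def)

definition rr :: "nat \<Rightarrow> fm" where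
  "rr k = (if k \<le> 2*n then b *\<^sub>R se k - se (Suc k) else 0)"

lemma emb_rsc_diff: "k \<le> 2*n \<Longrightarrow> emb (rsc b (s k) - s (Suc k)) = rr k"
proof -
  assume k: "k \<le> 2*n"
  have c: "s k \<in> carrier_mat q q" "s (k+1) \<in> carrier_mat q q" using s_car k by auto
  thus ?thesis using k unfolding rr_def se_def rsc_def
    by (subst emb_minus, auto simp: emb_smult)
qed

lemma rr_qb: "qb q (rr k)"
  unfolding rr_def by (auto intro!: qb_diff qb_scaleR se_qb simp: qb_zero)

lemma rr_adj: "adj (rr k) = rr k"
  unfolding rr_def by (auto simp: se_adj)

sublocale C: core q rr a by (unfold_locales, rule rr_qb, rule rr_adj)

lemma emb_shat: "m \<le> 2*n - 1 \<Longrightarrow> emb (shat a b s m) = hH a rr 0 m"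
proof -
  assume m: "m \<le> 2*n - 1"
  have c: "s m \<in> carrier_mat q q" "s (m+1) \<in> carrier_mat q q" "s (m+2) \<in> carrier_mat q q"
    using s_car m n1 by auto
  have e1: "emb (rsc (-(a*b)) (s m)) = (-(a*b)) *\<^sub>R se m" unfolding rsc_def se_def by (rule emb_smult)
  have e2: "emb (rsc (a+b) (s (Suc m))) = (a+b) *\<^sub>R se (Suc m)"
    unfolding rsc_def se_def by (rule emb_smult)
  have c2: "rsc (-(a*b)) (s m) \<in> carrier_mat q q" "rsc (a+b) (s (Suc m)) \<in> carrier_mat q q"
    using c unfolding rsc_def by auto
  have "emb (shat a b s m) = emb (rsc (-(a*b)) (s m) + rsc (a+b) (s (Suc m))) - emb (s (m+2))"
    unfolding shat_def using c c2 by (subst emb_minus, auto)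
  also have "\<dots> = (-(a*b)) *\<^sub>R se m + (a+b) *\<^sub>R se (Suc m) - se (Suc (Suc m))"
    using c2 by (subst emb_add, auto simp: e1 e2 se_def)
  finally have "emb (shat a b s m) = (-(a*b)) *\<^sub>R se m + (a+b) *\<^sub>R se (Suc m) - se (Suc (Suc m))" .
  also have "\<dots> = hH a rr 0 m"
  proof -
    have "m \<le> 2*n" "Suc m \<le> 2*n" using m n1 by auto
    thus ?thesis unfolding hH_def rr_def by (simp add: algebra_simps)
  qed
  finally show ?thesis .
qed

lemma embK: assumes j: "j \<le> n" shows "emb (K1 q b s j) = BM q (hK rr) (Suc j)"
proof -
  have "emb (K1 q b s j) = (\<Sum>l<Suc j. \<Sum>k<Suc j. J q l * emb (rsc b (s (l+k)) - s (l+k+1)) * adj (J q k))"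
  proof (unfold K1_def, subst emb_block_mat[OF qpos])
    fix l r assume "l < j+1" "r < j+1"
    hence "l + r + 1 \<le> 2*n+1" "l+r \<le> 2*n+1" using j by auto
    thus "rsc b (s (l+r)) - s (l+r+1) \<in> carrier_mat q q" using s_car unfolding rsc_def
      by (intro minus_carrier_mat smult_carrier_mat, auto)
  qed simp
  also have "\<dots> = BM q (hK rr) (Suc j)"
    unfolding BM_def hK_def using j by (intro sum.cong refl, simp add: emb_rsc_diff)
  finally show ?thesis .
qed

lemma embH: assumes j: "j \<le> n - 1" shows "emb (H2 q a b s j) = BM q (hH a rr) (Suc j)"
proof -
  have "emb (H2 q a b s j) = (\<Sum>l<Suc j. \<Sum>k<Suc j. J q l * emb (shat a b s (l+k)) * adj (J q k))"
  proof (unfold H2_def, subst emb_block_mat[OF qpos])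
    fix l r assume "l < j+1" "r < j+1"
    hence "l + r + 2 \<le> 2*n+1" using j n1 by auto
    thus "shat a b s (l+r) \<in> carrier_mat q q" using s_car unfolding shat_def rsc_def
      by (intro minus_carrier_mat add_carrier_mat smult_carrier_mat, auto)
  qed simp
  also have "\<dots> = BM q (hH a rr) (Suc j)"
    unfolding BM_def using j n1 by (intro sum.cong refl, simp add: emb_shat hH_def)
  finally show ?thesis .
qed

lemma K1_car: "K1 q b s j \<in> carrier_mat ((j+1)*q) ((j+1)*q)" by (simp add: K1_def block_mat_def)
lemma H2_car: "H2 q a b s j \<in> carrier_mat ((j+1)*q) ((j+1)*q)" by (simp add: H2_def block_mat_def)

lemma detK: assumes j: "j \<le> n" shows "det (K1 q b s j) \<noteq> 0"
proof (rule pd_sub[OF pdK K1_car K1_car])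
  show "(j+1)*q \<le> (n+1)*q" using j by simp
  fix i k assume ik: "i < (j+1)*q" "k < (j+1)*q"
  have "(j+1)*q \<le> (n+1)*q" using j by simp
  hence "i < (n+1)*q" "k < (n+1)*q" using ik by linarith+
  thus "K1 q b s j $$ (i,k) = K1 q b s n $$ (i,k)" using ik by (simp add: K1_def block_mat_def)
qed

lemma detH: assumes j: "j \<le> n - 1" shows "det (H2 q a b s j) \<noteq> 0"
proof (rule pd_sub[OF pdH H2_car H2_car])
  show "(j+1)*q \<le> (n-1+1)*q" using j by simp
  fix i k assume ik: "i < (j+1)*q" "k < (j+1)*q"
  have "(j+1)*q \<le> (n-1+1)*q" using j by simp
  hence "i < (n-1+1)*q" "k < (n-1+1)*q" using ik by linarith+
  thus "H2 q a b s j $$ (i,k) = H2 q a b s (n-1) $$ (i,k)" using ik by (simp add: H2_def block_mat_def)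
qed

definition MK :: "nat \<Rightarrow> nat \<Rightarrow> nat \<Rightarrow> fm" where
  "MK j l k = adj (J q l) * emb (minv (K1 q b s j)) * J q k"
definition MH :: "nat \<Rightarrow> nat \<Rightarrow> nat \<Rightarrow> fm" where
  "MH j l k = adj (J q l) * emb (minv (H2 q a b s j)) * J q k"

lemma invbK: assumes j: "j \<le> n" shows "C.K.invb (MK j) (Suc j)"
  unfolding MK_def
proof (rule invb_from)
  show "gram q (hK rr)" by (rule C.K.gram_axioms)
  have m: "emb (minv (K1 q b s j)) * emb (K1 q b s j) = Pm q (Suc j)"
          "emb (K1 q b s j) * emb (minv (K1 q b s j)) = Pm q (Suc j)"
    using minv_emb[OF K1_car detK[OF j] qpos, of "Suc j"] by auto
  thus "emb (minv (K1 q b s j)) * BM q (hK rr) (Suc j) = Pm q (Suc j)"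
       "BM q (hK rr) (Suc j) * emb (minv (K1 q b s j)) = Pm q (Suc j)"
    by (simp_all add: embK[OF j])
qed

lemma invbH: assumes j: "j \<le> n - 1" shows "C.H.invb (MH j) (Suc j)"
  unfolding MH_def
proof (rule invb_from)
  show "gram q (hH a rr)" by (rule C.H.gram_axioms)
  have m: "emb (minv (H2 q a b s j)) * emb (H2 q a b s j) = Pm q (Suc j)"
          "emb (H2 q a b s j) * emb (minv (H2 q a b s j)) = Pm q (Suc j)"
    using minv_emb[OF H2_car detH[OF j] qpos, of "Suc j"] by auto
  thus "emb (minv (H2 q a b s j)) * BM q (hH a rr) (Suc j) = Pm q (Suc j)"
       "BM q (hH a rr) (Suc j) * emb (minv (H2 q a b s j)) = Pm q (Suc j)"
    by (simp_all add: embH[OF j])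
qed

end

declare sum.lessThan_Suc[simp del]

lemma emb_Tm: assumes q: "0 < q" shows "emb (Tm q j) = (\<Sum>k<j. J q (Suc k) * adj (J q k))"
proof -
  have "emb (Tm q j) = (\<Sum>l<Suc j. \<Sum>k<Suc j. J q l * emb (if l = k+1 then 1\<^sub>m q else 0\<^sub>m q q) * adj (J q k))"
    unfolding Tm_def by (subst emb_block_mat[OF q], auto)
  also have "\<dots> = (\<Sum>l<Suc j. \<Sum>k<Suc j. if l = Suc k then J q l * adj (J q k) else 0)"
    by (intro sum.cong refl, auto simp: emb_zero Iq_def[symmetric] J_Iq)
  also have "\<dots> = (\<Sum>l<j. \<Sum>k<Suc j. if Suc l = Suc k then J q (Suc l) * adj (J q k) else 0)"
    by (subst sum.lessThan_Suc_shift, simp)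
  also have "\<dots> = (\<Sum>l<j. J q (Suc l) * adj (J q l))"
    by (intro sum.cong refl, simp add: sum_if_eq')
  finally show ?thesis .
qed

lemma adjJ_sum: assumes y: "\<And>i. qb q (y i)" and k: "k < m"
  shows "adj (J q k) * (\<Sum>i<m. J q i * y i) = y k"
proof -
  have "adj (J q k) * (\<Sum>i<m. J q i * y i) = (\<Sum>i<m. if k = i then Iq q * y i else 0)"
    by (simp add: sum_distrib_left mult.assoc[symmetric] adjJ_J if_distrib[of "\<lambda>x. x * _"] cong: if_cong)
  also have "\<dots> = y k" using k by (simp add: sum_if_eq' qbD(1)[OF y])
  finally show ?thesis .
qed

lemma Pm_sum: "Pm q m * (\<Sum>i<m. J q i * y i) = (\<Sum>i<m. J q i * y i)"
  by (simp add: sum_distrib_left mult.assoc[symmetric] Pm_J)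

lemma solveR: assumes q: "0 < q" and y: "\<And>i. qb q (y i)"
  and x0: "x 0 = y 0" and xs: "\<And>i. i < j \<Longrightarrow> x (Suc i) = y (Suc i) - a *\<^sub>R y i"
  shows "emb (Rm q j (complex_of_real a)) * (\<Sum>i<Suc j. J q i * x i) = (\<Sum>i<Suc j. J q i * y i)"
proof -
  define A where "A = 1\<^sub>m ((j+1)*q) - complex_of_real a \<cdot>\<^sub>m Tm q j"
  have Ac: "A \<in> carrier_mat ((j+1)*q) ((j+1)*q)" unfolding A_def by (auto simp: Tm_def block_mat_def)
  have dA: "det A \<noteq> 0" unfolding A_def using IT_det[of j q "complex_of_real a"] by simp
  have R: "emb (Rm q j (complex_of_real a)) * emb A = Pm q (Suc j)"
    using minv_emb(1)[OF Ac dA q, of "Suc j"] by (simp add: Rm_def A_def)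
  let ?Y = "\<Sum>i<Suc j. J q i * y i"
  have eA: "emb A = Pm q (Suc j) - a *\<^sub>R (\<Sum>k<j. J q (Suc k) * adj (J q k))"
  proof -
    have Tc: "dim_row (Tm q j) = (j+1)*q" "dim_col (Tm q j) = (j+1)*q" by (auto simp: Tm_def block_mat_def)
    have "emb A = emb (1\<^sub>m ((j+1)*q)) - emb (complex_of_real a \<cdot>\<^sub>m Tm q j)"
      unfolding A_def by (rule emb_minus, auto simp: Tc)
    also have "\<dots> = Pm q (Suc j) - a *\<^sub>R emb (Tm q j)"
      using emb_one_block[OF q, of "Suc j"] by (simp add: emb_smult)
    finally show ?thesis by (simp add: emb_Tm[OF q])
  qed
  have TY: "(\<Sum>k<j. J q (Suc k) * adj (J q k)) * ?Y = (\<Sum>k<j. J q (Suc k) * y k)"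
    by (simp add: sum_distrib_right mult.assoc adjJ_sum[OF y])
  have "emb A * ?Y = ?Y - a *\<^sub>R (\<Sum>k<j. J q (Suc k) * y k)"
    unfolding eA by (simp add: left_diff_distrib Pm_sum TY)
  also have "\<dots> = J q 0 * y 0 + (\<Sum>k<j. J q (Suc k) * (y (Suc k) - a *\<^sub>R y k))"
    by (simp add: sum.lessThan_Suc_shift right_diff_distrib sum_subtractf scaleR_sum_right)
  also have "\<dots> = (\<Sum>i<Suc j. J q i * x i)"
    by (simp add: sum.lessThan_Suc_shift x0 xs)
  finally have AY: "emb A * ?Y = (\<Sum>i<Suc j. J q i * x i)" .
  have "emb (Rm q j (complex_of_real a)) * (\<Sum>i<Suc j. J q i * x i) = Pm q (Suc j) * ?Y"
    by (simp add: AY[symmetric] mult.assoc[symmetric] R)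
  also have "\<dots> = ?Y" by (rule Pm_sum)
  finally show ?thesis .
qed



declare sum.lessThan_Suc[simp del]

lemma emb_mult_car: "A \<in> carrier_mat n m \<Longrightarrow> B \<in> carrier_mat m k \<Longrightarrow> emb (A*B) = emb A * emb B"
  by (rule emb_mult, auto)

context hyp begin

abbreviation "za \<equiv> complex_of_real a"

lemma Rm_car: "Rm q j za \<in> carrier_mat ((j+1)*q) ((j+1)*q)"
proof -
  have Ac: "1\<^sub>m ((j+1)*q) - za \<cdot>\<^sub>m Tm q j \<in> carrier_mat ((j+1)*q) ((j+1)*q)"
    by (auto simp: Tm_def block_mat_def)
  have "det (1\<^sub>m ((j+1)*q) - za \<cdot>\<^sub>m Tm q j) \<noteq> 0" using IT_det[of j q za] by simp
  thus ?thesis using det_minv[OF Ac] unfolding Rm_def by auto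
qed

lemma vm_car: "vm q j \<in> carrier_mat ((j+1)*q) q" by (simp add: vm_def block_col_def)
lemma u2_car: "u2 q a b s j \<in> carrier_mat ((j+1)*q) q" by (simp add: u2_def block_col_def)
lemma ut1_car: "ut1 q b s j \<in> carrier_mat ((j+1)*q) q" by (simp add: ut1_def block_col_def)

lemma emb_vm: "emb (vm q j) = (\<Sum>i<Suc j. J q i * (if i = 0 then Iq q else 0))"
  unfolding vm_def by (subst emb_block_col[OF qpos], auto intro!: sum.cong simp: Iq_def emb_zero)

lemma embR_vm: "emb (Rm q j za * vm q j) = (\<Sum>i<Suc j. J q i * (a^i *\<^sub>R Iq q))"
proof -
  have "emb (Rm q j za * vm q j) = emb (Rm q j za) * emb (vm q j)"
    by (rule emb_mult_car[OF Rm_car vm_car])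
  also have "\<dots> = (\<Sum>i<Suc j. J q i * (a^i *\<^sub>R Iq q))"
    unfolding emb_vm by (rule solveR[OF qpos], auto intro!: qb_scaleR qb_Iq)
  finally show ?thesis .
qed

lemma emb_u20: "emb (u20 a b s) + a *\<^sub>R se 0 = - rr 0"
proof -
  have c: "s 0 \<in> carrier_mat q q" "s 1 \<in> carrier_mat q q" using s_car by auto
  have e: "emb (rsc (-(a+b)) (s 0)) = (-(a+b)) *\<^sub>R se 0" unfolding rsc_def se_def by (rule emb_smult)
  have "emb (u20 a b s) = emb (rsc (-(a+b)) (s 0)) + emb (s 1)"
    unfolding u20_def by (rule emb_add, insert c, auto simp: rsc_def)
  also have "\<dots> = (-(a+b)) *\<^sub>R se 0 + se 1" by (simp only: e se_def)
  finally have "emb (u20 a b s) = (-(a+b)) *\<^sub>R se 0 + se 1" .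
  thus ?thesis unfolding rr_def by (simp add: algebra_simps)
qed

lemma embR_u2: assumes j: "j \<le> n"
  shows "emb (Rm q j za * (u2 q a b s j + za \<cdot>\<^sub>m (vm q j * s 0))) = (\<Sum>i<Suc j. J q i * (- rr i))"
proof -
  define x where "x i = (if i = 0 then emb (u20 a b s) + a *\<^sub>R se 0 else - emb (shat a b s (i-1)))" for i
  have s0: "s 0 \<in> carrier_mat q q" using s_car by auto
  have c1: "(if i = 0 then u20 a b s else - shat a b s (i-1)) \<in> carrier_mat q q" if "i < j+1" for i
  proof -
    have "i - 1 + 2 \<le> 2*n+1" using that j n1 by auto
    hence "s (i-1) \<in> carrier_mat q q" "s (i-1+1) \<in> carrier_mat q q" "s (i-1+2) \<in> carrier_mat q q"
      using s_car by auto
    moreover have "s 1 \<in> carrier_mat q q" using s_car by auto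
    ultimately show ?thesis using s0 unfolding u20_def shat_def rsc_def by auto
  qed
  have eu: "emb (u2 q a b s j) = (\<Sum>i<Suc j. J q i * emb (if i = 0 then u20 a b s else - shat a b s (i-1)))"
    unfolding u2_def by (subst emb_block_col[OF qpos], insert c1, auto)
  have ev: "emb (vm q j * s 0) = (\<Sum>i<Suc j. J q i * (if i = 0 then se 0 else 0))"
    using emb_mult_car[OF vm_car s0] unfolding emb_vm se_def
    by (simp add: sum_distrib_right mult.assoc if_distrib[of "\<lambda>x. x * _"] emb_Iq'[OF s0] cong: if_cong)
  have "emb (u2 q a b s j + za \<cdot>\<^sub>m (vm q j * s 0)) = emb (u2 q a b s j) + a *\<^sub>R emb (vm q j * s 0)"
  proof -
    have "za \<cdot>\<^sub>m (vm q j * s 0) \<in> carrier_mat ((j+1)*q) q" using vm_car[of j] s0 by auto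
    hence "emb (u2 q a b s j + za \<cdot>\<^sub>m (vm q j * s 0)) = emb (u2 q a b s j) + emb (za \<cdot>\<^sub>m (vm q j * s 0))"
      using u2_car[of j] by (intro emb_add, auto)
    thus ?thesis by (simp add: emb_smult)
  qed
  also have "\<dots> = (\<Sum>i<Suc j. J q i * x i)"
    unfolding eu ev x_def scaleR_sum_right sum.distrib[symmetric]
    by (intro sum.cong refl, auto simp: distrib_left emb_uminus)
  finally have ex: "emb (u2 q a b s j + za \<cdot>\<^sub>m (vm q j * s 0)) = (\<Sum>i<Suc j. J q i * x i)" .
  have "emb (Rm q j za * (u2 q a b s j + za \<cdot>\<^sub>m (vm q j * s 0))) = emb (Rm q j za) * (\<Sum>i<Suc j. J q i * x i)"
  proof -
    have cc: "u2 q a b s j + za \<cdot>\<^sub>m (vm q j * s 0) \<in> carrier_mat ((j+1)*q) q"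
      using u2_car[of j] vm_car[of j] s0 by (intro add_carrier_mat smult_carrier_mat mult_carrier_mat, auto)
    show ?thesis using emb_mult_car[OF Rm_car cc] ex by simp
  qed
  also have "\<dots> = (\<Sum>i<Suc j. J q i * (- rr i))"
  proof (rule solveR[OF qpos])
    show "\<And>i. qb q (- rr i)" by (intro qb_uminus rr_qb)
    show "x 0 = - rr 0" unfolding x_def by (simp add: emb_u20)
    fix i assume i: "i < j"
    hence "i \<le> 2*n - 1" using j n1 by auto
    thus "x (Suc i) = - rr (Suc i) - a *\<^sub>R (- rr i)" unfolding x_def
      by (simp add: emb_shat hH_def)
  qed
  finally show ?thesis .
qed

primrec sig :: "nat \<Rightarrow> fm" where
  "sig 0 = se 0"
| "sig (Suc i) = a *\<^sub>R sig i - rr i"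

lemma sig_qb: "qb q (sig i)"
  by (induct i, auto intro!: qb_diff qb_scaleR rr_qb se_qb)

lemma embR_ut1: assumes j: "j \<le> n"
  shows "emb (Rm q j za * ut1 q b s j) = (\<Sum>i<Suc j. J q i * sig i)"
proof -
  define x where "x i = emb (if i = 0 then s 0 else s i - rsc b (s (i-1)))" for i
  have c1: "(if i = 0 then s 0 else s i - rsc b (s (i-1))) \<in> carrier_mat q q" if "i < j+1" for i
  proof -
    have "i \<le> 2*n+1" "i - 1 \<le> 2*n+1" using that j by auto
    hence "s i \<in> carrier_mat q q" "s (i-1) \<in> carrier_mat q q" using s_car by auto
    thus ?thesis unfolding rsc_def by (auto intro!: minus_carrier_mat smult_carrier_mat)
  qed
  have eu: "emb (ut1 q b s j) = (\<Sum>i<Suc j. J q i * x i)"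
    unfolding ut1_def x_def by (subst emb_block_col[OF qpos], insert c1, auto)
  have "emb (Rm q j za * ut1 q b s j) = emb (Rm q j za) * (\<Sum>i<Suc j. J q i * x i)"
    using emb_mult_car[OF Rm_car ut1_car] eu by simp
  also have "\<dots> = (\<Sum>i<Suc j. J q i * sig i)"
  proof (rule solveR[OF qpos])
    show "\<And>i. qb q (sig i)" by (rule sig_qb)
    show "x 0 = sig 0" unfolding x_def by (simp add: se_def)
    fix i assume i: "i < j"
    hence i2: "i \<le> 2*n" "Suc i \<le> 2*n+1" using j by auto
    have "x (Suc i) = se (Suc i) - b *\<^sub>R se i"
      unfolding x_def se_def rsc_def using s_car[OF i2(2)] s_car[of i] i2
      by (simp add: emb_minus emb_smult)
    also have "\<dots> = - rr i" using i2 unfolding rr_def by simp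
    finally show "x (Suc i) = sig (Suc i) - a *\<^sub>R sig i" by simp
  qed
  finally show ?thesis .
qed

end

lemma hcat_ob: assumes g: "gram q h" and q: "0 < q"
  and Mi: "Mi \<in> carrier_mat (j*q) (j*q)" and Y: "Y \<in> carrier_mat (j*q) q"
  and eY: "emb Y = (\<Sum>l<j. J q l * h l j)" and i: "i \<le> j"
  shows "emb (hcat (- (mat_adjoint Y * Mi)) (1\<^sub>m q)) * J q i
     = gram.ob q h (\<lambda>l k. adj (J q l) * emb Mi * J q k) j i"
proof -
  interpret gram q h by fact
  define X where "X = - (mat_adjoint Y * Mi)"
  have Xc: "X \<in> carrier_mat q (j*q)" unfolding X_def using Mi Y by auto
  have eX: "emb X = - ((\<Sum>l<j. h j l * adj (J q l)) * emb Mi)"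
    unfolding X_def emb_uminus using Y Mi by (subst emb_mult, auto simp: emb_adj eY hh)
  have "emb (hcat X (1\<^sub>m q)) * J q i = emb X * J q i + adj (J q j) * J q i"
    by (simp add: emb_hcat[OF Xc] distrib_right)
  also have "\<dots> = ob (\<lambda>l k. adj (J q l) * emb Mi * J q k) j i"
  proof (cases "i = j")
    case True thus ?thesis using embX_J[OF Xc, of j] by (simp add: adjJ_J ob_top)
  next
    case False
    hence "i < j" using i by simp
    thus ?thesis using False unfolding eX
      by (simp add: adjJ_J ob_def sum_distrib_right mult.assoc)
  qed
  finally show ?thesis unfolding X_def .
qed


declare sum.lessThan_Suc[simp del]

context hyp begin

lemma minvK_car: "minv (K1 q b s j) \<in> carrier_mat ((j+1)*q) ((j+1)*q)" if "j \<le> n" for j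
  using det_minv[OF K1_car detK[OF that]] by auto
lemma minvH_car: "minv (H2 q a b s j) \<in> carrier_mat ((j+1)*q) ((j+1)*q)" if "j \<le> n - 1" for j
  using det_minv[OF H2_car detH[OF that]] by auto

lemma emb_Yt1: assumes j: "j \<le> n"
  shows "emb (Yt1 q b s j) = (\<Sum>l<j. J q l * hK rr l j)"
proof -
  have c: "rsc b (s (j+l)) - s (j+l+1) \<in> carrier_mat q q" if "l < j" for l
  proof -
    have "j + l + 1 \<le> 2*n+1" "j+l \<le> 2*n+1" using that j by auto
    thus ?thesis using s_car unfolding rsc_def by (intro minus_carrier_mat smult_carrier_mat, auto)
  qed
  have "emb (Yt1 q b s j) = (\<Sum>l<j. J q l * emb (rsc b (s (j+l)) - s (j+l+1)))"
    unfolding Yt1_def by (rule emb_block_col[OF qpos c])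
  also have "\<dots> = (\<Sum>l<j. J q l * hK rr l j)"
  proof (rule sum.cong[OF refl])
    fix l assume "l \<in> {..<j}"
    hence "j + l \<le> 2*n" using j by auto
    thus "J q l * emb (rsc b (s (j+l)) - s (j+l+1)) = J q l * hK rr l j"
      using emb_rsc_diff[of "j+l"] by (simp add: hK_def add.commute)
  qed
  finally show ?thesis .
qed

lemma emb_Y2: assumes j: "j \<le> n"
  shows "emb (Y2 q a b s j) = (\<Sum>l<j. J q l * hH a rr l j)"
proof -
  have c: "shat a b s (j+l) \<in> carrier_mat q q" if "l < j" for l
  proof -
    have "j + l + 2 \<le> 2*n+1" using that j by auto
    thus ?thesis using s_car unfolding shat_def rsc_def
      by (intro minus_carrier_mat add_carrier_mat smult_carrier_mat, auto)
  qed
  have "emb (Y2 q a b s j) = (\<Sum>l<j. J q l * emb (shat a b s (j+l)))"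
    unfolding Y2_def by (rule emb_block_col[OF qpos c])
  also have "\<dots> = (\<Sum>l<j. J q l * hH a rr l j)"
  proof (rule sum.cong[OF refl])
    fix l assume "l \<in> {..<j}"
    hence "j + l \<le> 2*n - 1" using j by auto
    thus "J q l * emb (shat a b s (j+l)) = J q l * hH a rr l j"
      using emb_shat[of "j+l"] by (simp add: hH_def add.commute)
  qed
  finally show ?thesis .
qed

definition HcK where "HcK j = hcat (- (mat_adjoint (Yt1 q b s j) * minv (K1 q b s (j-1)))) (1\<^sub>m q)"
definition HcH where "HcH j = hcat (- (mat_adjoint (Y2 q a b s j) * minv (H2 q a b s (j-1)))) (1\<^sub>m q)"

lemma HcK_car: assumes "1 \<le> j" "j \<le> n" shows "HcK j \<in> carrier_mat q ((j+1)*q)"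
proof -
  have "minv (K1 q b s (j-1)) \<in> carrier_mat (j*q) (j*q)" using minvK_car[of "j-1"] assms by simp
  thus ?thesis unfolding HcK_def hcat_def by (auto simp: Yt1_def block_col_def)
qed
lemma HcH_car: assumes "1 \<le> j" "j \<le> n" shows "HcH j \<in> carrier_mat q ((j+1)*q)"
proof -
  have "minv (H2 q a b s (j-1)) \<in> carrier_mat (j*q) (j*q)" using minvH_car[of "j-1"] assms by simp
  thus ?thesis unfolding HcH_def hcat_def by (auto simp: Y2_def block_col_def)
qed

lemma HcK_J: assumes "1 \<le> j" "j \<le> n" "i \<le> j"
  shows "emb (HcK j) * J q i = C.K.ob (MK (j-1)) j i"
proof -
  have Mi: "minv (K1 q b s (j-1)) \<in> carrier_mat (j*q) (j*q)" using minvK_car[of "j-1"] assms by simp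
  have Y: "Yt1 q b s j \<in> carrier_mat (j*q) q" by (simp add: Yt1_def block_col_def)
  show ?thesis unfolding HcK_def MK_def
    by (rule hcat_ob[OF C.K.gram_axioms qpos Mi Y emb_Yt1[OF assms(2)] assms(3)])
qed

lemma HcH_J: assumes "1 \<le> j" "j \<le> n" "i \<le> j"
  shows "emb (HcH j) * J q i = C.H.ob (MH (j-1)) j i"
proof -
  have Mi: "minv (H2 q a b s (j-1)) \<in> carrier_mat (j*q) (j*q)" using minvH_car[of "j-1"] assms by simp
  have Y: "Y2 q a b s j \<in> carrier_mat (j*q) q" by (simp add: Y2_def block_col_def)
  show ?thesis unfolding HcH_def MH_def
    by (rule hcat_ob[OF C.H.gram_axioms qpos Mi Y emb_Y2[OF assms(2)] assms(3)])
qed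

lemma HcK_sum: assumes "1 \<le> j" "j \<le> n" "\<And>i. qb q (y i)"
  shows "emb (HcK j) * (\<Sum>i<Suc j. J q i * y i) = (\<Sum>i<Suc j. C.K.ob (MK (j-1)) j i * y i)"
  using assms by (simp add: sum_distrib_left mult.assoc[symmetric] HcK_J)

lemma HcH_sum: assumes "1 \<le> j" "j \<le> n" "\<And>i. qb q (y i)"
  shows "emb (HcH j) * (\<Sum>i<Suc j. J q i * y i) = (\<Sum>i<Suc j. C.H.ob (MH (j-1)) j i * y i)"
  using assms by (simp add: sum_distrib_left mult.assoc[symmetric] HcH_J)

lemma emb3: "A \<in> carrier_mat n1 n2 \<Longrightarrow> B \<in> carrier_mat n2 n3 \<Longrightarrow> C \<in> carrier_mat n3 n4 \<Longrightarrow>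
   emb (A * B * C) = emb A * emb (B * C)"
  by (subst assoc_mult_mat[of A n1 n2 B n3 C n4], auto intro!: emb_mult)

lemma Gamma_form: assumes "1 \<le> j" "j \<le> n"
  shows "emb (Gamma1 q b s j za) = (\<Sum>i<Suc j. a^i *\<^sub>R C.K.ob (MK (j-1)) j i)"
proof -
  have "emb (Gamma1 q b s j za) = emb (HcK j) * emb (Rm q j za * vm q j)"
  proof -
    have "Gamma1 q b s j za = HcK j * Rm q j za * vm q j" using assms unfolding Gamma1_def HcK_def by simp
    thus ?thesis using emb3[OF HcK_car[OF assms] Rm_car vm_car] by simp
  qed
  also have "\<dots> = (\<Sum>i<Suc j. C.K.ob (MK (j-1)) j i * (a^i *\<^sub>R Iq q))"
    unfolding embR_vm by (rule HcK_sum[OF assms], intro qb_scaleR qb_Iq)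
  also have "\<dots> = (\<Sum>i<Suc j. a^i *\<^sub>R C.K.ob (MK (j-1)) j i)"
    using C.K.ob_qb[OF invbK[of "j-1"]] assms by (auto intro!: sum.cong simp: qbD)
  finally show ?thesis .
qed

lemma uvs_car: "u2 q a b s j + za \<cdot>\<^sub>m (vm q j * s 0) \<in> carrier_mat ((j+1)*q) q"
proof -
  have s0: "s 0 \<in> carrier_mat q q" using s_car by auto
  show ?thesis using u2_car[of j] vm_car[of j] s0 by (intro add_carrier_mat smult_carrier_mat mult_carrier_mat, auto)
qed

lemma Q2_form: assumes "1 \<le> j" "j \<le> n"
  shows "emb (Q2 q a b s j za) = (\<Sum>i<Suc j. C.H.ob (MH (j-1)) j i * rr i)"
proof -
  have "Q2 q a b s j za = - (HcH j * Rm q j za * (u2 q a b s j + za \<cdot>\<^sub>m (vm q j * s 0)))"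
    using assms unfolding Q2_def HcH_def by simp
  hence "emb (Q2 q a b s j za) = - (emb (HcH j) * emb (Rm q j za * (u2 q a b s j + za \<cdot>\<^sub>m (vm q j * s 0))))"
    using emb3[OF HcH_car[OF assms] Rm_car uvs_car] by (simp add: emb_uminus)
  also have "\<dots> = - (\<Sum>i<Suc j. C.H.ob (MH (j-1)) j i * (- rr i))"
    unfolding embR_u2[OF assms(2)] by (subst HcH_sum[OF assms], auto intro!: qb_uminus rr_qb)
  also have "\<dots> = (\<Sum>i<Suc j. C.H.ob (MH (j-1)) j i * rr i)" by (simp add: sum_negf)
  finally show ?thesis .
qed

lemma P2_form: assumes "1 \<le> j" "j \<le> n"
  shows "emb (P2 q a b s j za) = (\<Sum>i<Suc j. a^i *\<^sub>R C.H.ob (MH (j-1)) j i)"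
proof -
  have "P2 q a b s j za = HcH j * Rm q j za * vm q j" using assms unfolding P2_def HcH_def by simp
  hence "emb (P2 q a b s j za) = emb (HcH j) * emb (Rm q j za * vm q j)"
    using emb3[OF HcH_car[OF assms] Rm_car vm_car] by simp
  also have "\<dots> = (\<Sum>i<Suc j. C.H.ob (MH (j-1)) j i * (a^i *\<^sub>R Iq q))"
    unfolding embR_vm by (rule HcH_sum[OF assms], intro qb_scaleR qb_Iq)
  also have "\<dots> = (\<Sum>i<Suc j. a^i *\<^sub>R C.H.ob (MH (j-1)) j i)"
  proof -
    have "j - 1 \<le> n - 1" using assms by simp
    thus ?thesis using C.H.ob_qb[OF invbH[of "j-1"]] assms by (auto intro!: sum.cong simp: qbD)
  qed
  finally show ?thesis .
qed

lemma Theta_form: assumes "1 \<le> j" "j \<le> n"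
  shows "emb (Theta1 q b s j za) = (\<Sum>i<Suc j. C.K.ob (MK (j-1)) j i * sig i)"
proof -
  have "Theta1 q b s j za = HcK j * Rm q j za * ut1 q b s j" using assms unfolding Theta1_def HcK_def by simp
  hence "emb (Theta1 q b s j za) = emb (HcK j) * emb (Rm q j za * ut1 q b s j)"
    using emb3[OF HcK_car[OF assms] Rm_car ut1_car] by simp
  also have "\<dots> = (\<Sum>i<Suc j. C.K.ob (MK (j-1)) j i * sig i)"
    unfolding embR_ut1[OF assms(2)] by (rule HcK_sum[OF assms sig_qb])
  finally show ?thesis .
qed

lemma adj_Jsum: "adj (\<Sum>i<m. J q i * c i) = (\<Sum>i<m. adj (c i) * adj (J q i))" by simp

lemma quad_emb: assumes c: "\<And>k. qb q (c k)"
  shows "adj (\<Sum>i<m. J q i * c i) * X * (\<Sum>i<m. J q i * c i)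
       = (\<Sum>k<m. (\<Sum>l<m. adj (c l) * (adj (J q l) * X * J q k)) * c k)"
proof -
  have "adj (\<Sum>i<m. J q i * c i) * X * (\<Sum>i<m. J q i * c i)
      = (\<Sum>l<m. adj (c l) * adj (J q l)) * X * (\<Sum>k<m. J q k * c k)" by simp
  also have "\<dots> = (\<Sum>k<m. \<Sum>l<m. adj (c l) * (adj (J q l) * X * J q k) * c k)"
    by (simp add: sum_distrib_left sum_distrib_right mult.assoc)
  also have "\<dots> = (\<Sum>k<m. (\<Sum>l<m. adj (c l) * (adj (J q l) * X * J q k)) * c k)"
    by (simp add: sum_distrib_right)
  finally show ?thesis .
qed

lemma quad_jnf: "w \<in> carrier_mat N q \<Longrightarrow> M \<in> carrier_mat N N \<Longrightarrow>
   emb (mat_adjoint w * M * w) = adj (emb w) * emb M * emb w"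
proof -
  assume w: "w \<in> carrier_mat N q" and M: "M \<in> carrier_mat N N"
  have aw: "mat_adjoint w \<in> carrier_mat q N" using w by auto
  have "emb (mat_adjoint w * M * w) = emb (mat_adjoint w * M) * emb w"
    by (rule emb_mult_car[OF _ w], insert aw M, auto)
  also have "emb (mat_adjoint w * M) = emb (mat_adjoint w) * emb M" by (rule emb_mult_car[OF aw M])
  finally show ?thesis by (simp add: emb_adj)
qed

lemma mu_form: assumes "j \<le> n"
  shows "emb (mu q a b s j) = C.K.quad (MK j) (Suc j) (\<lambda>k. a^k *\<^sub>R Iq q)"
proof -
  let ?w = "Rm q j za * vm q j"
  have wc: "?w \<in> carrier_mat ((j+1)*q) q" using Rm_car[of j] vm_car[of j] by auto
  have "emb (mu q a b s j) = adj (emb ?w) * emb (minv (K1 q b s j)) * emb ?w"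
    unfolding mu_def Let_def by (rule quad_jnf[OF wc minvK_car[OF assms]])
  also have "\<dots> = C.K.quad (MK j) (Suc j) (\<lambda>k. a^k *\<^sub>R Iq q)"
    unfolding embR_vm quad_emb[of "\<lambda>k. a^k *\<^sub>R Iq q", OF qb_scaleR[OF qb_Iq]]
    unfolding C.K.quad_def C.K.kap_def MK_def by simp
  finally show ?thesis .
qed

lemma lam_form: assumes "j \<le> n - 1"
  shows "emb (lam q a b s j) = C.H.quad (MH j) (Suc j) rr"
proof -
  let ?w = "Rm q j za * (u2 q a b s j + rsc a (vm q j * s 0))"
  have wc: "?w \<in> carrier_mat ((j+1)*q) q" using Rm_car[of j] uvs_car[of j] unfolding rsc_def by auto
  have jn: "j \<le> n" using assms by simp
  have "emb (lam q a b s j) = adj (emb ?w) * emb (minv (H2 q a b s j)) * emb ?w"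
    unfolding lam_def Let_def by (rule quad_jnf[OF wc minvH_car[OF assms]])
  also have "\<dots> = C.H.quad (MH j) (Suc j) (\<lambda>k. - rr k)"
    unfolding rsc_def embR_u2[OF jn] quad_emb[of "\<lambda>k. - rr k", OF qb_uminus[OF rr_qb]]
    unfolding C.H.quad_def C.H.kap_def MH_def by simp
  also have "\<dots> = C.H.quad (MH j) (Suc j) rr"
    unfolding C.H.quad_def C.H.kap_def by (simp add: sum_negf)
  finally show ?thesis .
qed

end

declare sum.lessThan_Suc[simp del]

context hyp begin

abbreviation cK :: "nat \<Rightarrow> fm" where "cK \<equiv> \<lambda>k. a^k *\<^sub>R Iq q"

definition gam :: "nat \<Rightarrow> fm" where "gam j = (\<Sum>i<Suc j. a^i *\<^sub>R C.K.ob (MK (j-1)) j i)"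
definition Qf :: "nat \<Rightarrow> fm" where "Qf j = (\<Sum>i<Suc j. C.H.ob (MH (j-1)) j i * rr i)"
definition D1 :: "nat \<Rightarrow> fm" where "D1 j = C.K.Dd (MK (j-1)) j"
definition D2 :: "nat \<Rightarrow> fm" where "D2 j = C.H.Dd (MH (j-1)) j"

lemma cK_qb: "qb q (cK k)" by (intro qb_scaleR qb_Iq)

lemma invbK': "j \<le> n + 1 \<Longrightarrow> C.K.invb (MK (j-1)) j"
  by (cases j, simp add: C.K.invb_def, simp add: invbK)
lemma invbH': "j \<le> n \<Longrightarrow> C.H.invb (MH (j-1)) j"
  by (cases j, simp add: C.H.invb_def, insert invbH, auto)

lemma gam_qb: "j \<le> n + 1 \<Longrightarrow> qb q (gam j)"
  unfolding gam_def by (intro qb_sum qb_scaleR C.K.ob_qb[OF invbK'])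
lemma Qf_qb: "j \<le> n \<Longrightarrow> qb q (Qf j)"
  unfolding Qf_def by (intro qb_sum qb_mult C.H.ob_qb[OF invbH'] rr_qb)

lemma gam_beta: assumes "j \<le> n + 1" shows "C.K.beta (MK (j-1)) j cK = gam j"
  unfolding C.K.beta_def gam_def using C.K.ob_qb[OF invbK'[OF assms]]
  by (intro sum.cong refl, simp add: qbD)

lemma gam0: "gam 0 = Iq q" unfolding gam_def by (simp add: sum.lessThan_Suc C.K.ob_top)
lemma Qf0: "Qf 0 = rr 0" unfolding Qf_def by (simp add: sum.lessThan_Suc C.H.ob_top qbD rr_qb)

lemma gam_emb: "j \<le> n \<Longrightarrow> emb (Gamma1 q b s j za) = gam j"
proof (cases "j = 0")
  case True thus ?thesis by (simp add: Gamma1_def gam0 Iq_def)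
next
  case False
  assume "j \<le> n" thus ?thesis using Gamma_form[of j] False unfolding gam_def by simp
qed

lemma Qf_emb: "j \<le> n \<Longrightarrow> emb (Q2 q a b s j za) = Qf j"
proof (cases "j = 0")
  case True
  have c: "u20 a b s \<in> carrier_mat q q" "s 0 \<in> carrier_mat q q" using s_car
    unfolding u20_def rsc_def by auto
  have "emb (Q2 q a b s j za) = - (emb (u20 a b s) + a *\<^sub>R se 0)"
    using True c unfolding Q2_def se_def by (simp add: emb_uminus emb_smult emb_add)
  thus ?thesis using True by (simp add: emb_u20 Qf0)
next
  case False
  assume "j \<le> n" thus ?thesis using Q2_form[of j] False unfolding Qf_def by simp
qed

lemma mu_emb: "j \<le> n \<Longrightarrow> emb (mu q a b s j) = C.K.quad (MK j) (Suc j) cK"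
  by (rule mu_form)
lemma lam_emb: "j \<le> n - 1 \<Longrightarrow> emb (lam q a b s j) = C.H.quad (MH j) (Suc j) rr"
  by (rule lam_form)

lemma adj_car: "w \<in> carrier_mat N m \<Longrightarrow> mat_adjoint w \<in> carrier_mat m N"
  by (rule carrier_matI, simp_all add: carrier_matD)

lemma mu_car: assumes "j \<le> n" shows "mu q a b s j \<in> carrier_mat q q"
proof -
  have "Rm q j za * vm q j \<in> carrier_mat ((j+1)*q) q" using Rm_car[of j] vm_car[of j] by auto
  then show ?thesis using minvK_car[OF assms] adj_car unfolding mu_def Let_def
    by (metis mult_carrier_mat)
qed

lemma lam_car: assumes "j \<le> n - 1" shows "lam q a b s j \<in> carrier_mat q q"
proof -
  have "Rm q j za * (u2 q a b s j + rsc a (vm q j * s 0)) \<in> carrier_mat ((j+1)*q) q"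
    using Rm_car[of j] uvs_car[of j] unfolding rsc_def by auto
  then show ?thesis using minvH_car[OF assms] adj_car unfolding lam_def Let_def
    by (metis mult_carrier_mat)
qed

lemma mD_car: "j \<le> n \<Longrightarrow> mDSM q a b s j \<in> carrier_mat q q"
  unfolding mDSM_def using mu_car[of j] mu_car[of "j-1"] by (auto intro!: minus_carrier_mat)
lemma lD_car: "j \<le> n - 1 \<Longrightarrow> lDSM q a b s j \<in> carrier_mat q q"
  unfolding lDSM_def using lam_car[of j] lam_car[of "j-1"] by (auto intro!: minus_carrier_mat)

lemma mD_emb: assumes j: "j \<le> n"
  shows "emb (mDSM q a b s j) = adj (gam j) * MK j j j * gam j"
proof -
  have sch: "C.K.quad (MK j) (Suc j) cK = C.K.quad (MK (j-1)) j cK + adj (gam j) * MK j j j * gam j"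
  proof -
    have a1: "C.K.invb (MK (j-1)) j" using invbK'[of j] j by simp
    have a2: "C.K.invb (MK j) (Suc j)" using invbK[OF j] .
    have "Suc (j - 1) = j \<or> j = 0" by auto
    hence a3: "C.K.invb (MK (j-1)) j" using a1 by simp
    show ?thesis using C.K.schur[OF a3, of "MK j" cK] a2 cK_qb gam_beta[of j] j
      by (cases j) simp_all
  qed
  show ?thesis
  proof (cases "j = 0")
    case True
    thus ?thesis using sch mu_emb[of 0] by (simp add: mDSM_def C.K.quad_def)
  next
    case False
    then obtain j' where jj: "j = Suc j'" by (cases j, auto)
    have "emb (mDSM q a b s j) = emb (mu q a b s j) - emb (mu q a b s j')"
      using False jj mu_car[OF j] mu_car[of j'] j unfolding mDSM_def by (simp add: emb_minus)
    also have "\<dots> = adj (gam j) * MK j j j * gam j"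
      using sch jj j mu_emb[of j] mu_emb[of j'] by simp
    finally show ?thesis .
  qed
qed

lemma Qf_beta: "C.H.beta (MH (j-1)) j rr = Qf j"
  unfolding C.H.beta_def Qf_def by simp

lemma lD_emb: assumes j: "j \<le> n - 1"
  shows "emb (lDSM q a b s j) = adj (Qf j) * MH j j j * Qf j"
proof -
  have j1: "j \<le> n" using j by simp
  have sch: "C.H.quad (MH j) (Suc j) rr = C.H.quad (MH (j-1)) j rr + adj (Qf j) * MH j j j * Qf j"
    using C.H.schur[OF invbH'[OF j1], of "MH j" rr] invbH[OF j] rr_qb Qf_beta[of j] by (cases j) simp_all
  show ?thesis
  proof (cases "j = 0")
    case True
    thus ?thesis using sch lam_emb[of 0] by (simp add: lDSM_def C.H.quad_def)
  next
    case False
    then obtain j' where jj: "j = Suc j'" by (cases j, auto)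
    have "emb (lDSM q a b s j) = emb (lam q a b s j) - emb (lam q a b s j')"
      using False jj lam_car[OF j] lam_car[of j'] j unfolding lDSM_def by (simp add: emb_minus)
    also have "\<dots> = adj (Qf j) * MH j j j * Qf j"
      using sch jj j lam_emb[of j] lam_emb[of j'] by simp
    finally show ?thesis .
  qed
qed

lemma I3': assumes j: "j \<le> n" shows "Qf j * adj (gam j) = D1 j"
  unfolding Qf_def gam_def D1_def
  by (rule C.I3[OF invbK'[of j] invbH'[OF j]], insert j, auto)

lemma D1_inv: assumes j: "j \<le> n" shows "D1 j * MK j j j = Iq q" "MK j j j * D1 j = Iq q"
  unfolding D1_def using C.K.D_inv[OF invbK'[of j] ] invbK[OF j] j by (cases j, auto)+

lemma I4': assumes j: "j \<le> n - 1" shows "gam (Suc j) * adj (Qf j) = - D2 j"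
proof -
  have j1: "j \<le> n" using j by simp
  have "C.K.invb (MK j) (Suc j)" using invbK j1 by simp
  thus ?thesis unfolding gam_def Qf_def D2_def using C.I4[OF _ invbH'[OF j1]] by simp
qed

lemma D2_inv: assumes j: "j \<le> n - 1" shows "D2 j * MH j j j = Iq q" "MH j j j * D2 j = Iq q"
proof -
  have j1: "j \<le> n" using j by simp
  show "D2 j * MH j j j = Iq q" "MH j j j * D2 j = Iq q"
    unfolding D2_def using C.H.D_inv[OF invbH'[OF j1] invbH[OF j]] by auto
qed

lemma I5': assumes j: "1 \<le> j" "j \<le> n - 1"
  shows "emb (P2 q a b s j za) = Qf j * C.K.quad (MK j) (Suc j) cK"
proof -
  have j1: "j \<le> n" using j by simp
  have "emb (P2 q a b s j za) = (\<Sum>l<Suc j. a^l *\<^sub>R C.H.ob (MH (j-1)) j l)"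
    using P2_form[of j] j1 j by simp
  also have "\<dots> = Qf j * C.K.quad (MK j) (Suc j) cK"
    unfolding Qf_def by (rule C.I5[OF invbK[OF j1] invbH'[OF j1]])
  finally show ?thesis .
qed

lemma I6': assumes j: "1 \<le> j" "j \<le> n"
  shows "emb (Theta1 q b s j za) = gam j * (se 0 + C.H.quad (MH (j-1)) j rr)"
proof -
  have "emb (Theta1 q b s j za) = (\<Sum>i<Suc j. C.K.ob (MK (j-1)) j i * sig i)"
    using Theta_form[OF j] .
  also have "\<dots> = gam j * (se 0 + C.H.quad (MH (j-1)) j rr)"
    unfolding gam_def by (rule C.I6[OF invbK'[of j] invbH'[of j]], insert j, auto)
  finally show ?thesis .
qed

end

declare sum.lessThan_Suc[simp del]

lemma qb_is_emb: assumes y: "qb q y" shows "emb (mat q q (\<lambda>(i,k). ent y i k)) = y"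
proof (rule fm_eqI)
  fix i k
  have "ent y i k = ent (Iq q * y * Iq q) i k" using y by (simp add: qbD)
  also have "\<dots> = (if i < q \<and> k < q then ent y i k else 0)" by (simp add: Iq_times times_Iq)
  finally have e: "ent y i k = (if i < q \<and> k < q then ent y i k else 0)" .
  show "ent (emb (mat q q (\<lambda>(i,k). ent y i k))) i k = ent y i k"
  proof (cases "i < q \<and> k < q")
    case True thus ?thesis by (simp add: ent_emb)
  next
    case False thus ?thesis using e by (auto simp: ent_emb)
  qed
qed

lemma inv_emb: assumes X: "X \<in> carrier_mat q q" and y: "qb q y"
  and Xy: "emb X * y = Iq q" and yX: "y * emb X = Iq q"
  shows "emb (minv X) = y" "minv X \<in> carrier_mat q q"
proof -
  define Y where "Y = mat q q (\<lambda>(i,k). ent y i k)"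
  have Yc: "Y \<in> carrier_mat q q" unfolding Y_def by simp
  have eY: "emb Y = y" unfolding Y_def by (rule qb_is_emb[OF y])
  have "X * Y = 1\<^sub>m q"
    by (rule emb_inj[of _ q q], insert X Yc, auto simp: emb_mult_car[OF X Yc] eY Xy Iq_def)
  moreover have "Y * X = 1\<^sub>m q"
    by (rule emb_inj[of _ q q], insert X Yc, auto simp: emb_mult_car[OF Yc X] eY yX Iq_def)
  ultimately have M: "minv X \<in> carrier_mat q q" "X * minv X = 1\<^sub>m q" "minv X * X = 1\<^sub>m q"
    using minv_prop[OF X Yc] by auto
  show "minv X \<in> carrier_mat q q" by (rule M(1))
  have "emb (minv X) = emb (minv X) * Iq q" using M(1) by (simp add: emb_Iq2')
  also have "\<dots> = emb (minv X * X) * y" using M(1) X by (simp add: Xy[symmetric] emb_mult_car mult.assoc)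
  also have "\<dots> = y" using M(3) y by (simp add: Iq_def[symmetric] qbD)
  finally show "emb (minv X) = y" .
qed

lemma inv_sandwich: assumes qX: "qb q X" and qXi: "qb q Xi" and qN: "qb q Nn" and qD: "qb q Dd"
  and a1: "X * Xi = Iq q" and a2: "Xi * X = Iq q" and a3: "Nn * Dd = Iq q" and a4: "Dd * Nn = Iq q"
  shows "(adj X * Nn * X) * (Xi * Dd * adj Xi) = Iq q" "(Xi * Dd * adj Xi) * (adj X * Nn * X) = Iq q"
proof -
  have "(adj X * Nn * X) * (Xi * Dd * adj Xi) = adj X * (Nn * (X * Xi) * Dd) * adj Xi"
    by (simp add: mult.assoc)
  also have "Nn * (X * Xi) * Dd = Iq q" using a1 a3 qN by (simp add: qbD)
  also have "adj X * Iq q * adj Xi = adj (Xi * X)" using qb_adj[OF qX] by (simp add: qbD)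
  finally show "(adj X * Nn * X) * (Xi * Dd * adj Xi) = Iq q" using a2 by (simp add: adj_Iq)
  have "(Xi * Dd * adj Xi) * (adj X * Nn * X) = Xi * (Dd * adj (X * Xi) * Nn) * X"
    by (simp add: mult.assoc)
  also have "Dd * adj (X * Xi) * Nn = Iq q" using a1 a4 qD by (simp add: adj_Iq qbD)
  also have "Xi * Iq q * X = Iq q" using a2 qXi by (simp add: qbD)
  finally show "(Xi * Dd * adj Xi) * (adj X * Nn * X) = Iq q" .
qed

lemma emb_sgn: "emb (((-1)^j :: complex) \<cdot>\<^sub>m A) = (-1)^j *\<^sub>R emb A"
proof -
  have "((-1)^j :: complex) = complex_of_real ((-1)^j)" by simp
  thus ?thesis using emb_smult[of "(-1)^j" A] by simp
qed

context hyp begin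

lemma D1_qb: "j \<le> n \<Longrightarrow> qb q (D1 j)"
  unfolding D1_def C.K.Dd_def by (intro qb_sum qb_mult C.K.ob_qb[OF invbK'] C.K.hq, auto)
lemma D2_qb: "j \<le> n \<Longrightarrow> qb q (D2 j)"
  unfolding D2_def C.H.Dd_def by (intro qb_sum qb_mult C.H.ob_qb[OF invbH'] C.H.hq, auto)
lemma MKjj_qb: "j \<le> n \<Longrightarrow> qb q (MK j j j)" using C.K.invbD(3)[OF invbK] by auto
lemma MHjj_qb: "j \<le> n - 1 \<Longrightarrow> qb q (MH j j j)" using C.H.invbD(3)[OF invbH] by auto

lemma step: assumes j: "j \<le> n - 1" and gi: "qb q gi" "gam j * gi = Iq q" "gi * gam j = Iq q"
  shows "emb (minv (mDSM q a b s j)) = gi * D1 j * adj gi"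
    and "minv (mDSM q a b s j) \<in> carrier_mat q q"
    and "Qf j = gam j * emb (minv (mDSM q a b s j))"
    and "minv (lDSM q a b s j) \<in> carrier_mat q q"
    and "gam (Suc j) = - (Qf j * emb (minv (lDSM q a b s j)))"
    and "\<exists>gi'. qb q gi' \<and> gam (Suc j) * gi' = Iq q \<and> gi' * gam (Suc j) = Iq q"
proof -
  have j1: "j \<le> n" using j by simp
  note g = gam_qb[of j] and Qq = Qf_qb[OF j1] and D1q = D1_qb[OF j1] and Nq = MKjj_qb[OF j1]
  note D2q = D2_qb[OF j1] and N2q = MHjj_qb[OF j]
  have gq: "qb q (gam j)" using g j by simp
  let ?m = "adj (gam j) * MK j j j * gam j"
  let ?mi = "gi * D1 j * adj gi"
  have mi: "?m * ?mi = Iq q" "?mi * ?m = Iq q"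
    using inv_sandwich[OF gq gi(1) Nq D1q gi(2,3) D1_inv(2)[OF j1] D1_inv(1)[OF j1]] by auto
  have miq: "qb q ?mi" by (intro qb_mult qb_adj gi(1) D1q)
  have mq: "qb q ?m" by (intro qb_mult qb_adj gq Nq)
  have em: "emb (mDSM q a b s j) = ?m" by (rule mD_emb[OF j1])
  show emi: "emb (minv (mDSM q a b s j)) = ?mi" and mic: "minv (mDSM q a b s j) \<in> carrier_mat q q"
    using inv_emb[OF mD_car[OF j1] miq] em mi by auto
  have Qm: "Qf j * ?m = gam j"
  proof -
    have "Qf j * ?m = (Qf j * adj (gam j)) * MK j j j * gam j" by (simp add: mult.assoc)
    also have "\<dots> = gam j" using I3'[OF j1] D1_inv(1)[OF j1] gq by (simp add: qbD)
    finally show ?thesis .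
  qed
  have Qeq: "Qf j = gam j * ?mi"
  proof -
    have "Qf j = Qf j * (?m * ?mi)" using mi Qq by (simp add: qbD)
    also have "\<dots> = gam j * ?mi" using Qm by (simp add: mult.assoc[symmetric])
    finally show ?thesis .
  qed
  thus "Qf j = gam j * emb (minv (mDSM q a b s j))" using emi by simp
  let ?Qi = "?m * gi"
  have Qi: "Qf j * ?Qi = Iq q" "?Qi * Qf j = Iq q"
  proof -
    have "Qf j * ?Qi = gam j * (?mi * ?m) * gi" using Qeq by (simp add: mult.assoc)
    also have "\<dots> = Iq q" using mi gi gq by (simp add: qbD)
    finally show "Qf j * ?Qi = Iq q" .
    have "?Qi * Qf j = ?m * (gi * gam j) * ?mi" using Qeq by (simp add: mult.assoc)
    also have "\<dots> = Iq q" using mi gi mq by (simp add: qbD)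
    finally show "?Qi * Qf j = Iq q" .
  qed
  have Qiq: "qb q ?Qi" by (intro qb_mult mq gi(1))
  let ?l = "adj (Qf j) * MH j j j * Qf j"
  let ?li = "?Qi * D2 j * adj ?Qi"
  have li: "?l * ?li = Iq q" "?li * ?l = Iq q"
    using inv_sandwich[OF Qq Qiq N2q D2q Qi D2_inv(2)[OF j] D2_inv(1)[OF j]] by auto
  have liq: "qb q ?li" by (intro qb_mult qb_adj Qiq D2q)
  have lq: "qb q ?l" by (intro qb_mult qb_adj Qq N2q)
  have el: "emb (lDSM q a b s j) = ?l" by (rule lD_emb[OF j])
  have eli: "emb (minv (lDSM q a b s j)) = ?li" and "minv (lDSM q a b s j) \<in> carrier_mat q q"
    using inv_emb[OF lD_car[OF j] liq] el li by auto
  thus "minv (lDSM q a b s j) \<in> carrier_mat q q" by simp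
  have g1q: "qb q (gam (Suc j))" using gam_qb[of "Suc j"] j1 by simp
  have gl: "gam (Suc j) * ?l = - Qf j"
  proof -
    have "gam (Suc j) * ?l = (gam (Suc j) * adj (Qf j)) * MH j j j * Qf j" by (simp add: mult.assoc)
    also have "\<dots> = - Qf j" using I4'[OF j] D2_inv(1)[OF j] Qq by (simp add: qbD)
    finally show ?thesis .
  qed
  have geq: "gam (Suc j) = - (Qf j * ?li)"
  proof -
    have "gam (Suc j) = gam (Suc j) * (?l * ?li)" using li g1q by (simp add: qbD)
    also have "\<dots> = - (Qf j * ?li)" using gl by (simp add: mult.assoc[symmetric])
    finally show ?thesis .
  qed
  thus "gam (Suc j) = - (Qf j * emb (minv (lDSM q a b s j)))" using eli by simp
  show "\<exists>gi'. qb q gi' \<and> gam (Suc j) * gi' = Iq q \<and> gi' * gam (Suc j) = Iq q"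
  proof (intro exI conjI)
    let ?gi = "- (?l * ?Qi)"
    show "qb q ?gi" by (intro qb_uminus qb_mult lq Qiq)
    have "gam (Suc j) * ?gi = Qf j * (?li * ?l) * ?Qi" using geq by (simp add: mult.assoc)
    also have "\<dots> = Iq q" using li Qi Qq by (simp add: qbD)
    finally show "gam (Suc j) * ?gi = Iq q" .
    have "?gi * gam (Suc j) = ?l * (?Qi * Qf j) * ?li" using geq by (simp add: mult.assoc)
    also have "\<dots> = Iq q" using li Qi lq by (simp add: qbD)
    finally show "?gi * gam (Suc j) = Iq q" .
  qed
qed

lemma ind: "j \<le> n \<Longrightarrow> gam j = (-1)^j *\<^sub>R emb (mlprod q a b s j) \<and> mlprod q a b s j \<in> carrier_mat q q
   \<and> (\<exists>gi. qb q gi \<and> gam j * gi = Iq q \<and> gi * gam j = Iq q)"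
proof (induct j)
  case 0
  show ?case by (auto simp: gam0 Iq_def[symmetric] intro!: exI[of _ "Iq q"] qb_Iq Iq_Iq)
next
  case (Suc j)
  hence j: "j \<le> n - 1" by simp
  from Suc obtain gi where IH: "gam j = (-1)^j *\<^sub>R emb (mlprod q a b s j)" "mlprod q a b s j \<in> carrier_mat q q"
    "qb q gi" "gam j * gi = Iq q" "gi * gam j = Iq q" by auto
  note st = step[OF j IH(3-5)]
  have c: "mlprod q a b s (Suc j) \<in> carrier_mat q q" using IH(2) st(2) st(4) by simp
  have e: "emb (mlprod q a b s (Suc j)) = emb (mlprod q a b s j) * emb (minv (mDSM q a b s j)) * emb (minv (lDSM q a b s j))"
    using emb_mult_car[OF mult_carrier_mat[OF IH(2) st(2)] st(4)] emb_mult_car[OF IH(2) st(2)] by simp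
  have "gam (Suc j) = (-1)^(Suc j) *\<^sub>R emb (mlprod q a b s (Suc j))"
    unfolding e st(5) st(3) IH(1) by simp
  thus ?case using c st(6) by simp
qed

lemma sum_mD: "j \<le> n \<Longrightarrow> (\<Sum>i<Suc j. emb (mDSM q a b s i)) = emb (mu q a b s j)"
proof (induct j)
  case 0 thus ?case by (simp add: sum.lessThan_Suc mDSM_def)
next
  case (Suc j)
  hence "(\<Sum>i<Suc (Suc j). emb (mDSM q a b s i)) = emb (mu q a b s j) + emb (mu q a b s (Suc j) - mu q a b s j)"
    by (simp add: sum.lessThan_Suc[of _ "Suc j"] mDSM_def)
  also have "\<dots> = emb (mu q a b s (Suc j))"
    using mu_car[of j] mu_car[of "Suc j"] Suc by (subst emb_minus, auto)
  finally show ?case .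
qed

lemma sum_lD: "j \<le> n - 1 \<Longrightarrow> (\<Sum>i<Suc j. emb (lDSM q a b s i)) = emb (lam q a b s j)"
proof (induct j)
  case 0 thus ?case by (simp add: sum.lessThan_Suc lDSM_def)
next
  case (Suc j)
  hence "(\<Sum>i<Suc (Suc j). emb (lDSM q a b s i)) = emb (lam q a b s j) + emb (lam q a b s (Suc j) - lam q a b s j)"
    by (simp add: sum.lessThan_Suc[of _ "Suc j"] lDSM_def)
  also have "\<dots> = emb (lam q a b s (Suc j))"
    using lam_car[of j] lam_car[of "Suc j"] Suc by (subst emb_minus, auto)
  finally show ?case .
qed

lemma msum_mD: assumes "j \<le> n"
  shows "emb (msum q (mDSM q a b s) (j+1)) = C.K.quad (MK j) (Suc j) cK"
  using emb_msum[of "j+1" "mDSM q a b s" q] mD_car assms sum_mD[OF assms] mu_emb[OF assms] by simp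

lemma msum_lD: assumes "1 \<le> j" "j \<le> n"
  shows "emb (msum q (lDSM q a b s) j) = C.H.quad (MH (j-1)) j rr"
proof -
  obtain j' where jj: "j = Suc j'" using assms by (cases j, auto)
  have j': "j' \<le> n - 1" using assms jj by simp
  have "emb (msum q (lDSM q a b s) j) = (\<Sum>i<Suc j'. emb (lDSM q a b s i))"
    using emb_msum[of j "lDSM q a b s" q] lD_car j' jj by simp
  also have "\<dots> = C.H.quad (MH (j-1)) j rr" using sum_lD[OF j'] lam_emb[OF j'] jj by simp
  finally show ?thesis .
qed

lemma msum_car': "(\<And>i. i < m \<Longrightarrow> f i \<in> carrier_mat q q) \<Longrightarrow> msum q f m \<in> carrier_mat q q"
  by (rule msum_carrier)

lemma Gamma1_car: assumes "1 \<le> j" "j \<le> n" shows "Gamma1 q b s j za \<in> carrier_mat q q"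
proof -
  have "Gamma1 q b s j za = HcK j * Rm q j za * vm q j" using assms unfolding Gamma1_def HcK_def by simp
  thus ?thesis using HcK_car[OF assms] Rm_car[of j] vm_car[of j] by (metis mult_carrier_mat)
qed
lemma P2_car: assumes "1 \<le> j" "j \<le> n" shows "P2 q a b s j za \<in> carrier_mat q q"
proof -
  have "P2 q a b s j za = HcH j * Rm q j za * vm q j" using assms unfolding P2_def HcH_def by simp
  thus ?thesis using HcH_car[OF assms] Rm_car[of j] vm_car[of j] by (metis mult_carrier_mat)
qed
lemma Theta1_car: assumes "1 \<le> j" "j \<le> n" shows "Theta1 q b s j za \<in> carrier_mat q q"
proof -
  have "Theta1 q b s j za = HcK j * Rm q j za * ut1 q b s j" using assms unfolding Theta1_def HcK_def by simp
  thus ?thesis using HcK_car[OF assms] Rm_car[of j] ut1_car[of j] by (metis mult_carrier_mat)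
qed
lemma Q2_car: "j \<le> n \<Longrightarrow> Q2 q a b s j za \<in> carrier_mat q q"
proof (cases "j = 0")
  case True
  have "u20 a b s \<in> carrier_mat q q" "s 0 \<in> carrier_mat q q" using s_car unfolding u20_def rsc_def by auto
  thus ?thesis using True unfolding Q2_def by auto
next
  case False
  assume j: "j \<le> n"
  hence "HcH j * Rm q j za * (u2 q a b s j + za \<cdot>\<^sub>m (vm q j * s 0)) \<in> carrier_mat q q"
    using HcH_car[of j] Rm_car[of j] uvs_car[of j] False by (metis less_one not_le mult_carrier_mat)
  thus ?thesis using False unfolding Q2_def HcH_def by simp
qed

lemma final:
  shows "(\<forall>j. j \<le> n-1 \<longrightarrow>
            Q2 q a b s j (complex_of_real a)
              = ((-1)^j) \<cdot>\<^sub>m (mlprod q a b s j * minv (mDSM q a b s j)))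
       \<and> (\<forall>j. 1 \<le> j \<and> j \<le> n \<longrightarrow>
            Gamma1 q b s j (complex_of_real a) = ((-1)^j) \<cdot>\<^sub>m mlprod q a b s j)
       \<and> (\<forall>j. 1 \<le> j \<and> j \<le> n-1 \<longrightarrow>
            P2 q a b s j (complex_of_real a)
              = ((-1)^j) \<cdot>\<^sub>m (mlprod q a b s j * minv (mDSM q a b s j)
                                * msum q (mDSM q a b s) (j+1)))
       \<and> (\<forall>j. 1 \<le> j \<and> j \<le> n \<longrightarrow>
            Theta1 q b s j (complex_of_real a)
              = ((-1)^j) \<cdot>\<^sub>m (mlprod q a b s j * (s 0 + msum q (lDSM q a b s) j)))"
proof (intro conjI allI impI)
  fix j assume j: "j \<le> n - 1"
  hence j1: "j \<le> n" by simp
  obtain gi where I: "gam j = (-1)^j *\<^sub>R emb (mlprod q a b s j)" "mlprod q a b s j \<in> carrier_mat q q"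
    "qb q gi" "gam j * gi = Iq q" "gi * gam j = Iq q" using ind[OF j1] by auto
  note st = step[OF j I(3-5)]
  show "Q2 q a b s j za = ((-1)^j) \<cdot>\<^sub>m (mlprod q a b s j * minv (mDSM q a b s j))"
  proof (rule emb_inj[OF Q2_car[OF j1]])
    show "((-1)^j) \<cdot>\<^sub>m (mlprod q a b s j * minv (mDSM q a b s j)) \<in> carrier_mat q q"
      using I(2) st(2) by auto
    show "emb (Q2 q a b s j za) = emb (((-1)^j) \<cdot>\<^sub>m (mlprod q a b s j * minv (mDSM q a b s j)))"
      unfolding emb_sgn Qf_emb[OF j1] st(3) I(1) using I(2) st(2) by (simp add: emb_mult_car[of _ q q])
  qed
next
  fix j assume j: "1 \<le> j \<and> j \<le> n"
  have I: "gam j = (-1)^j *\<^sub>R emb (mlprod q a b s j)" "mlprod q a b s j \<in> carrier_mat q q" using ind j by auto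
  show "Gamma1 q b s j za = ((-1)^j) \<cdot>\<^sub>m mlprod q a b s j"
    by (rule emb_inj[OF Gamma1_car], insert j I, auto simp: emb_sgn gam_emb)
next
  fix j assume j: "1 \<le> j \<and> j \<le> n - 1"
  hence j1: "j \<le> n" and j0: "j \<le> n - 1" "1 \<le> j" by auto
  obtain gi where I: "gam j = (-1)^j *\<^sub>R emb (mlprod q a b s j)" "mlprod q a b s j \<in> carrier_mat q q"
    "qb q gi" "gam j * gi = Iq q" "gi * gam j = Iq q" using ind[OF j1] by auto
  note st = step[OF j0(1) I(3-5)]
  have ms: "msum q (mDSM q a b s) (j+1) \<in> carrier_mat q q"
    by (rule msum_carrier, insert mD_car j1, auto)
  show "P2 q a b s j za = ((-1)^j) \<cdot>\<^sub>m (mlprod q a b s j * minv (mDSM q a b s j) * msum q (mDSM q a b s) (j+1))"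
  proof (rule emb_inj[OF P2_car[OF j0(2) j1]])
    show "((-1)^j) \<cdot>\<^sub>m (mlprod q a b s j * minv (mDSM q a b s j) * msum q (mDSM q a b s) (j+1)) \<in> carrier_mat q q"
      using I(2) st(2) ms by auto
    have "emb (P2 q a b s j za) = Qf j * C.K.quad (MK j) (Suc j) cK" by (rule I5'[OF j0(2) j0(1)])
    also have "\<dots> = (-1)^j *\<^sub>R (emb (mlprod q a b s j) * emb (minv (mDSM q a b s j)) * emb (msum q (mDSM q a b s) (j+1)))"
      unfolding st(3) I(1) msum_mD[OF j1] by simp
    also have "\<dots> = emb (((-1)^j) \<cdot>\<^sub>m (mlprod q a b s j * minv (mDSM q a b s j) * msum q (mDSM q a b s) (j+1)))"
      unfolding emb_sgn emb_mult_car[OF mult_carrier_mat[OF I(2) st(2)] ms] emb_mult_car[OF I(2) st(2)] ..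
    finally show "emb (P2 q a b s j za) = emb (((-1)^j) \<cdot>\<^sub>m (mlprod q a b s j * minv (mDSM q a b s j) * msum q (mDSM q a b s) (j+1)))" .
  qed
next
  fix j assume j: "1 \<le> j \<and> j \<le> n"
  hence j1: "j \<le> n" and j0: "1 \<le> j" by auto
  have I: "gam j = (-1)^j *\<^sub>R emb (mlprod q a b s j)" "mlprod q a b s j \<in> carrier_mat q q" using ind j1 by auto
  have ls: "msum q (lDSM q a b s) j \<in> carrier_mat q q"
    by (rule msum_carrier, insert lD_car j1, auto)
  have s0: "s 0 \<in> carrier_mat q q" using s_car by auto
  show "Theta1 q b s j za = ((-1)^j) \<cdot>\<^sub>m (mlprod q a b s j * (s 0 + msum q (lDSM q a b s) j))"
  proof (rule emb_inj[OF Theta1_car[OF j0 j1]])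
    show "((-1)^j) \<cdot>\<^sub>m (mlprod q a b s j * (s 0 + msum q (lDSM q a b s) j)) \<in> carrier_mat q q"
      using I(2) ls s0 by auto
    have "emb (Theta1 q b s j za) = gam j * (se 0 + C.H.quad (MH (j-1)) j rr)" by (rule I6'[OF j0 j1])
    also have "\<dots> = (-1)^j *\<^sub>R (emb (mlprod q a b s j) * (emb (s 0) + emb (msum q (lDSM q a b s) j)))"
      unfolding I(1) msum_lD[OF j0 j1] se_def by simp
    also have "\<dots> = emb (((-1)^j) \<cdot>\<^sub>m (mlprod q a b s j * (s 0 + msum q (lDSM q a b s) j)))"
    proof -
      have sc: "s 0 + msum q (lDSM q a b s) j \<in> carrier_mat q q" using s0 ls by auto
      have "emb (s 0 + msum q (lDSM q a b s) j) = emb (s 0) + emb (msum q (lDSM q a b s) j)"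
        using s0 ls by (intro emb_add, auto)
      thus ?thesis unfolding emb_sgn emb_mult_car[OF I(2) sc] by simp
    qed
    finally show "emb (Theta1 q b s j za) = emb (((-1)^j) \<cdot>\<^sub>m (mlprod q a b s j * (s 0 + msum q (lDSM q a b s) j)))" .
  qed
qed

end

theorem mainTheorem9:
  fixes q n :: nat and a b :: real and s :: "nat \<Rightarrow> complex mat"
  assumes "q \<ge> 1" and "n \<ge> 1" and "a < b"
    and "\<And>j. j \<le> 2*n+1 \<Longrightarrow> s j \<in> carrier_mat q q \<and> hermitian (s j)"
    and "pos_def (H1 q s n)" and "pos_def (H2 q a b s (n-1))"
    and "pos_def (K1 q b s n)" and "pos_def (K2 q a s n)"
  shows "(\<forall>j. j \<le> n-1 \<longrightarrow>
            Q2 q a b s j (complex_of_real a)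
              = ((-1)^j) \<cdot>\<^sub>m (mlprod q a b s j * minv (mDSM q a b s j)))
       \<and> (\<forall>j. 1 \<le> j \<and> j \<le> n \<longrightarrow>
            Gamma1 q b s j (complex_of_real a) = ((-1)^j) \<cdot>\<^sub>m mlprod q a b s j)
       \<and> (\<forall>j. 1 \<le> j \<and> j \<le> n-1 \<longrightarrow>
            P2 q a b s j (complex_of_real a)
              = ((-1)^j) \<cdot>\<^sub>m (mlprod q a b s j * minv (mDSM q a b s j)
                                * msum q (mDSM q a b s) (j+1)))
       \<and> (\<forall>j. 1 \<le> j \<and> j \<le> n \<longrightarrow>
            Theta1 q b s j (complex_of_real a)
              = ((-1)^j) \<cdot>\<^sub>m (mlprod q a b s j * (s 0 + msum q (lDSM q a b s) j)))"
proof -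
  interpret hyp q n a b s by (unfold_locales, insert assms, auto)
  show ?thesis by (rule final)
qed


end
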